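(* Let $\mathcal{Q}$ be a small involutive quantaloid. The full inclusion of the symmetrically complete symmetric $\mathcal{Q}$-categories into $\mathsf{SymCat}(\mathcal{Q})$ admits a left adjoint. Explicitly, for a symmetric $\mathcal{Q}$-category $\mathbb{A}$ the reflection is $\mathbb{A}_{\mathsf{sc}}$, the full subcategory of the Cauchy completion $\mathbb{A}_{\mathsf{cc}}$ on the symmetric left adjoint presheaves, and the unit at $\mathbb{A}$ is the functor $Y_{\mathbb{A}}\colon\mathbb{A}\to\mathbb{A}_{\mathsf{sc}}$, $x\mapsto\mathbb{A}(-,x)$.
   Context: A quantaloid is a category enriched in $\mathsf{Sup}$; an involution is an identity-on-objects, direction-reversing, monotone map $f\mapsto f^{\mathsf o}$ on morphisms with $(g\circ f)^{\mathsf o}=f^{\mathsf o}\circ g^{\mathsf o}$, $f^{\mathsf{oo}}=f$. A $\mathcal{Q}$-category $\mathbb{A}$: objects with types $tx\in\mathcal{Q}_0$, homs $\mathbb{A}(y,x)\colon tx\to ty$ with $\mathbb{A}(z,y)\circ\mathbb{A}(y,x)\le\mathbb{A}(z,x)$, $1_{tx}\le\mathbb{A}(x,x)$; symmetric if $\mathbb{A}(x,y)=\mathbb{A}(y,x)^{\mathsf o}$. Functors: type-preserving object maps $F$ with $\mathbb{A}(y,x)\le\mathbb{B}(Fy,Fx)$; $\mathsf{SymCat}(\mathcal{Q})$ is the category of symmetric $\mathcal{Q}$-categories and functors. Distributors $\Phi\colon\mathbb{A}\to\mathbb{B}$: arrows $\Phi(y,x)\colon tx\to ty$ compatible with the homs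 on both sides; composition $(\Psi\otimes\Phi)(z,x)=\bigvee_y\Psi(z,y)\circ\Phi(y,x)$; left adjoint with right adjoint $\Phi^*$ if $\mathbb{A}\le\Phi^*\otimes\Phi$, $\Phi\otimes\Phi^*\le\mathbb{B}$. For symmetric $\mathbb{A},\mathbb{B}$: $\Phi^{\mathsf o}(x,y)=\Phi(y,x)^{\mathsf o}$, and $\Phi$ is a symmetric left adjoint if left adjoint to $\Phi^{\mathsf o}$. $*_X$: one object of type $X$, hom $1_X$; a presheaf is a distributor $*_X\to\mathbb{A}$; it is representable if it equals $\mathbb{A}(-,a)$. $\mathbb{A}_{\mathsf{cc}}$: objects the left adjoint presheaves $\phi\colon *_X\to\mathbb{A}$ (type $X$), hom $\mathbb{A}_{\mathsf{cc}}(\psi,\phi)$ the unique element of $\psi^*\otimes\phi$. A symmetric $\mathbb{A}$ is symmetrically complete if every symmetric left adjoint presheaf on $\mathbb{A}$ is representable (equivalently, for every symmetric $\mathbb{B}$, $F\mapsto\mathbb{A}(-,F-)$ gives an equivalence between functors $\mathbb{B}\to\mathbb{A}$ and symmetric left adjoint distributors $\mathbb{B}\to\mathbb{A}$). *)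

theory Defs
  imports "HOL-Library.FuncSet"
begin

text \<open>A small quantaloid: a set of objects, for objects X Y the set of arrows X -> Y
  (q_hom Q X Y), composition (q_comp Q g f = g o f), identities, the local order
  (each hom a complete lattice, composition preserving arbitrary joins on both sides),
  and an involution.\<close>

record ('o, 'm) quantaloid =
  q_obs  :: "'o set"
  q_hom  :: "'o \<Rightarrow> 'o \<Rightarrow> 'm set"
  q_comp :: "'m \<Rightarrow> 'm \<Rightarrow> 'm"
  q_id   :: "'o \<Rightarrow> 'm"
  q_le   :: "'m \<Rightarrow> 'm \<Rightarrow> bool"
  q_inv  :: "'m \<Rightarrow> 'm"

definition is_lub :: "('o,'m) quantaloid \<Rightarrow> 'o \<Rightarrow> 'o \<Rightarrow> 'm set \<Rightarrow> 'm \<Rightarrow> bool" where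
  "is_lub Q X Y S s \<longleftrightarrow> s \<in> q_hom Q X Y \<and> (\<forall>t\<in>S. q_le Q t s) \<and>
     (\<forall>u\<in>q_hom Q X Y. (\<forall>t\<in>S. q_le Q t u) \<longrightarrow> q_le Q s u)"

definition qSup :: "('o,'m) quantaloid \<Rightarrow> 'o \<Rightarrow> 'o \<Rightarrow> 'm set \<Rightarrow> 'm" where
  "qSup Q X Y S = (THE s. is_lub Q X Y S s)"

definition quantaloid :: "('o,'m) quantaloid \<Rightarrow> bool" where
  "quantaloid Q \<longleftrightarrow>
    (\<forall>X Y f. f \<in> q_hom Q X Y \<longrightarrow> X \<in> q_obs Q \<and> Y \<in> q_obs Q) \<and>
    (\<forall>X Y X' Y' f. f \<in> q_hom Q X Y \<and> f \<in> q_hom Q X' Y' \<longrightarrow> X = X' \<and> Y = Y') \<and>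
    (\<forall>X Y Z f g. f \<in> q_hom Q X Y \<and> g \<in> q_hom Q Y Z \<longrightarrow> q_comp Q g f \<in> q_hom Q X Z) \<and>
    (\<forall>W X Y Z f g h. f \<in> q_hom Q W X \<and> g \<in> q_hom Q X Y \<and> h \<in> q_hom Q Y Z \<longrightarrow>
        q_comp Q h (q_comp Q g f) = q_comp Q (q_comp Q h g) f) \<and>
    (\<forall>X\<in>q_obs Q. q_id Q X \<in> q_hom Q X X) \<and>
    (\<forall>X Y f. f \<in> q_hom Q X Y \<longrightarrow> q_comp Q f (q_id Q X) = f \<and> q_comp Q (q_id Q Y) f = f) \<and>
    (\<forall>X Y. \<forall>f\<in>q_hom Q X Y. q_le Q f f) \<and>
    (\<forall>X Y. \<forall>f\<in>q_hom Q X Y. \<forall>g\<in>q_hom Q X Y. q_le Q f g \<and> q_le Q g f \<longrightarrow> f = g) \<and>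
    (\<forall>X Y. \<forall>f\<in>q_hom Q X Y. \<forall>g\<in>q_hom Q X Y. \<forall>h\<in>q_hom Q X Y.
        q_le Q f g \<and> q_le Q g h \<longrightarrow> q_le Q f h) \<and>
    (\<forall>X\<in>q_obs Q. \<forall>Y\<in>q_obs Q. \<forall>S. S \<subseteq> q_hom Q X Y \<longrightarrow> (\<exists>s. is_lub Q X Y S s)) \<and>
    (\<forall>X Y Z f S. f \<in> q_hom Q X Y \<and> S \<subseteq> q_hom Q Y Z \<longrightarrow>
        q_comp Q (qSup Q Y Z S) f = qSup Q X Z ((\<lambda>g. q_comp Q g f) ` S)) \<and>
    (\<forall>X Y Z g S. g \<in> q_hom Q Y Z \<and> S \<subseteq> q_hom Q X Y \<longrightarrow>
        q_comp Q g (qSup Q X Y S) = qSup Q X Z ((\<lambda>f. q_comp Q g f) ` S))"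

definition involutive_quantaloid :: "('o,'m) quantaloid \<Rightarrow> bool" where
  "involutive_quantaloid Q \<longleftrightarrow> quantaloid Q \<and>
    (\<forall>X Y f. f \<in> q_hom Q X Y \<longrightarrow> q_inv Q f \<in> q_hom Q Y X) \<and>
    (\<forall>X Y. \<forall>f\<in>q_hom Q X Y. \<forall>g\<in>q_hom Q X Y. q_le Q f g \<longrightarrow> q_le Q (q_inv Q f) (q_inv Q g)) \<and>
    (\<forall>X Y Z f g. f \<in> q_hom Q X Y \<and> g \<in> q_hom Q Y Z \<longrightarrow>
        q_inv Q (q_comp Q g f) = q_comp Q (q_inv Q f) (q_inv Q g)) \<and>
    (\<forall>X Y f. f \<in> q_hom Q X Y \<longrightarrow> q_inv Q (q_inv Q f) = f)"

text \<open>c_hom A y x = A(y,x) : tx -> ty.\<close>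

record ('a, 'o, 'm) qcat =
  c_ob  :: "'a set"
  c_ty  :: "'a \<Rightarrow> 'o"
  c_hom :: "'a \<Rightarrow> 'a \<Rightarrow> 'm"

definition qcat :: "('o,'m) quantaloid \<Rightarrow> ('a,'o,'m) qcat \<Rightarrow> bool" where
  "qcat Q A \<longleftrightarrow>
    (\<forall>x\<in>c_ob A. c_ty A x \<in> q_obs Q) \<and>
    (\<forall>x\<in>c_ob A. \<forall>y\<in>c_ob A. c_hom A y x \<in> q_hom Q (c_ty A x) (c_ty A y)) \<and>
    (\<forall>x\<in>c_ob A. \<forall>y\<in>c_ob A. \<forall>z\<in>c_ob A.
        q_le Q (q_comp Q (c_hom A z y) (c_hom A y x)) (c_hom A z x)) \<and>
    (\<forall>x\<in>c_ob A. q_le Q (q_id Q (c_ty A x)) (c_hom A x x))"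

definition symcat :: "('o,'m) quantaloid \<Rightarrow> ('a,'o,'m) qcat \<Rightarrow> bool" where
  "symcat Q A \<longleftrightarrow> qcat Q A \<and>
    (\<forall>x\<in>c_ob A. \<forall>y\<in>c_ob A. c_hom A x y = q_inv Q (c_hom A y x))"

definition qfunctor :: "('o,'m) quantaloid \<Rightarrow> ('a,'o,'m) qcat \<Rightarrow> ('b,'o,'m) qcat \<Rightarrow> ('a \<Rightarrow> 'b) \<Rightarrow> bool" where
  "qfunctor Q A B F \<longleftrightarrow>
    (\<forall>x\<in>c_ob A. F x \<in> c_ob B \<and> c_ty B (F x) = c_ty A x) \<and>
    (\<forall>x\<in>c_ob A. \<forall>y\<in>c_ob A. q_le Q (c_hom A y x) (c_hom B (F y) (F x)))"

text \<open>Isomorphic objects (1 <= B(b,b') and 1 <= B(b',b)); for functors this is the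
  (in the symmetric case, symmetric) local order of SymCat(Q).\<close>

definition iso_obj :: "('o,'m) quantaloid \<Rightarrow> ('b,'o,'m) qcat \<Rightarrow> 'b \<Rightarrow> 'b \<Rightarrow> bool" where
  "iso_obj Q B b b' \<longleftrightarrow> c_ty B b = c_ty B b' \<and>
     q_le Q (q_id Q (c_ty B b)) (c_hom B b b') \<and> q_le Q (q_id Q (c_ty B b')) (c_hom B b' b)"

text \<open>A distributor Phi : A -> B, with Phi y x = Phi(y,x) : tx -> ty.\<close>

definition dist :: "('o,'m) quantaloid \<Rightarrow> ('a,'o,'m) qcat \<Rightarrow> ('b,'o,'m) qcat \<Rightarrow> ('b \<Rightarrow> 'a \<Rightarrow> 'm) \<Rightarrow> bool" where
  "dist Q A B \<Phi> \<longleftrightarrow>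
    (\<forall>y\<in>c_ob B. \<forall>x\<in>c_ob A. \<Phi> y x \<in> q_hom Q (c_ty A x) (c_ty B y)) \<and>
    (\<forall>y'\<in>c_ob B. \<forall>y\<in>c_ob B. \<forall>x\<in>c_ob A. q_le Q (q_comp Q (c_hom B y' y) (\<Phi> y x)) (\<Phi> y' x)) \<and>
    (\<forall>y\<in>c_ob B. \<forall>x\<in>c_ob A. \<forall>x'\<in>c_ob A. q_le Q (q_comp Q (\<Phi> y x) (c_hom A x x')) (\<Phi> y x'))"

definition dcomp :: "('o,'m) quantaloid \<Rightarrow> ('a,'o,'m) qcat \<Rightarrow> ('b,'o,'m) qcat \<Rightarrow> ('c,'o,'m) qcat \<Rightarrow>
    ('c \<Rightarrow> 'b \<Rightarrow> 'm) \<Rightarrow> ('b \<Rightarrow> 'a \<Rightarrow> 'm) \<Rightarrow> ('c \<Rightarrow> 'a \<Rightarrow> 'm)" where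
  "dcomp Q A B C \<Psi> \<Phi> = (\<lambda>z x. qSup Q (c_ty A x) (c_ty C z) ((\<lambda>y. q_comp Q (\<Psi> z y) (\<Phi> y x)) ` c_ob B))"

definition dle :: "('o,'m) quantaloid \<Rightarrow> ('a,'o,'m) qcat \<Rightarrow> ('b,'o,'m) qcat \<Rightarrow>
    ('b \<Rightarrow> 'a \<Rightarrow> 'm) \<Rightarrow> ('b \<Rightarrow> 'a \<Rightarrow> 'm) \<Rightarrow> bool" where
  "dle Q A B \<Phi> \<Psi> \<longleftrightarrow> (\<forall>y\<in>c_ob B. \<forall>x\<in>c_ob A. q_le Q (\<Phi> y x) (\<Psi> y x))"

definition ladj :: "('o,'m) quantaloid \<Rightarrow> ('a,'o,'m) qcat \<Rightarrow> ('b,'o,'m) qcat \<Rightarrow>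
    ('b \<Rightarrow> 'a \<Rightarrow> 'm) \<Rightarrow> ('a \<Rightarrow> 'b \<Rightarrow> 'm) \<Rightarrow> bool" where
  "ladj Q A B \<Phi> \<Psi> \<longleftrightarrow> dist Q A B \<Phi> \<and> dist Q B A \<Psi> \<and>
     dle Q A A (c_hom A) (dcomp Q A B A \<Psi> \<Phi>) \<and> dle Q B B (dcomp Q B A B \<Phi> \<Psi>) (c_hom B)"

text \<open>Distributors are determined by their values on objects; to pick THE right adjoint
  we normalise junk values outside the object sets to undefined.\<close>

definition dext :: "('a,'o,'m) qcat \<Rightarrow> ('b,'o,'m) qcat \<Rightarrow> ('b \<Rightarrow> 'a \<Rightarrow> 'm) \<Rightarrow> bool" where
  "dext A B \<Phi> \<longleftrightarrow> (\<forall>y x. y \<notin> c_ob B \<or> x \<notin> c_ob A \<longrightarrow> \<Phi> y x = undefined)"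

definition radj :: "('o,'m) quantaloid \<Rightarrow> ('a,'o,'m) qcat \<Rightarrow> ('b,'o,'m) qcat \<Rightarrow>
    ('b \<Rightarrow> 'a \<Rightarrow> 'm) \<Rightarrow> ('a \<Rightarrow> 'b \<Rightarrow> 'm)" where
  "radj Q A B \<Phi> = (THE \<Psi>. ladj Q A B \<Phi> \<Psi> \<and> dext B A \<Psi>)"

definition dop :: "('o,'m) quantaloid \<Rightarrow> ('b \<Rightarrow> 'a \<Rightarrow> 'm) \<Rightarrow> ('a \<Rightarrow> 'b \<Rightarrow> 'm)" where
  "dop Q \<Phi> = (\<lambda>x y. q_inv Q (\<Phi> y x))"

definition sladj :: "('o,'m) quantaloid \<Rightarrow> ('a,'o,'m) qcat \<Rightarrow> ('b,'o,'m) qcat \<Rightarrow>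
    ('b \<Rightarrow> 'a \<Rightarrow> 'm) \<Rightarrow> bool" where
  "sladj Q A B \<Phi> \<longleftrightarrow> ladj Q A B \<Phi> (dop Q \<Phi>)"

definition ucat :: "('o,'m) quantaloid \<Rightarrow> 'o \<Rightarrow> (unit,'o,'m) qcat" where
  "ucat Q X = \<lparr>c_ob = {()}, c_ty = (\<lambda>_. X), c_hom = (\<lambda>_ _. q_id Q X)\<rparr>"

text \<open>A presheaf of type X on A is a distributor *_X -> A, i.e. phi :: 'a => unit => 'm.
  It is representable if it equals A(-,a) for some object a (necessarily of type X).\<close>

definition representable :: "('o,'m) quantaloid \<Rightarrow> ('a,'o,'m) qcat \<Rightarrow> 'o \<Rightarrow> ('a \<Rightarrow> unit \<Rightarrow> 'm) \<Rightarrow> bool" where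
  "representable Q A X \<phi> \<longleftrightarrow> (\<exists>a\<in>c_ob A. c_ty A a = X \<and> (\<forall>y\<in>c_ob A. \<phi> y () = c_hom A y a))"

definition symcomplete :: "('o,'m) quantaloid \<Rightarrow> ('a,'o,'m) qcat \<Rightarrow> bool" where
  "symcomplete Q A \<longleftrightarrow> symcat Q A \<and>
     (\<forall>X\<in>q_obs Q. \<forall>\<phi>. sladj Q (ucat Q X) A \<phi> \<longrightarrow> representable Q A X \<phi>)"

text \<open>A_cc: objects the left adjoint presheaves (X, phi) (normalised to be undefined
  outside the objects of A), of type X; hom A_cc(psi,phi) = the unique element of
  psi^* (x) phi, where psi^* is the right adjoint of psi.\<close>

definition cauchy :: "('o,'m) quantaloid \<Rightarrow> ('a,'o,'m) qcat \<Rightarrow> ('o \<times> ('a \<Rightarrow> unit \<Rightarrow> 'm),'o,'m) qcat" where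
  "cauchy Q A = \<lparr>
     c_ob = {(X, \<phi>). X \<in> q_obs Q \<and> \<phi> \<in> extensional (c_ob A) \<and>
                     (\<exists>\<Psi>. ladj Q (ucat Q X) A \<phi> \<Psi>)},
     c_ty = fst,
     c_hom = (\<lambda>(Y, \<psi>) (X, \<phi>).
        dcomp Q (ucat Q X) A (ucat Q Y) (radj Q (ucat Q Y) A \<psi>) \<phi> () ())\<rparr>"

definition symcompletion :: "('o,'m) quantaloid \<Rightarrow> ('a,'o,'m) qcat \<Rightarrow> ('o \<times> ('a \<Rightarrow> unit \<Rightarrow> 'm),'o,'m) qcat" where
  "symcompletion Q A = (cauchy Q A)\<lparr>c_ob :=
     {(X, \<phi>) \<in> c_ob (cauchy Q A). sladj Q (ucat Q X) A \<phi>}\<rparr>"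

definition yoneda :: "('o,'m) quantaloid \<Rightarrow> ('a,'o,'m) qcat \<Rightarrow> 'a \<Rightarrow> 'o \<times> ('a \<Rightarrow> unit \<Rightarrow> 'm)" where
  "yoneda Q A x = (c_ty A x, restrict (\<lambda>y _. c_hom A y x) (c_ob A))"

end

theory Submission
  imports Defs
begin


locale iq = fixes Q :: "('o,'m) quantaloid" assumes iq: "involutive_quantaloid Q"
begin

abbreviation "le \<equiv> q_le Q"
abbreviation "cmp \<equiv> q_comp Q"
abbreviation "hom \<equiv> q_hom Q"
abbreviation "iv \<equiv> q_inv Q"
abbreviation "one \<equiv> q_id Q"
abbreviation "obs \<equiv> q_obs Q"
abbreviation "qs \<equiv> qSup Q"

lemma qt: "quantaloid Q" using iq by (simp add: involutive_quantaloid_def)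
lemmas Q1 = qt[unfolded quantaloid_def, THEN conjunct1]
lemmas Q2 = qt[unfolded quantaloid_def, THEN conjunct2, THEN conjunct1]
lemmas Q3 = qt[unfolded quantaloid_def, THEN conjunct2, THEN conjunct2, THEN conjunct1]
lemmas Q4 = qt[unfolded quantaloid_def, THEN conjunct2, THEN conjunct2, THEN conjunct2, THEN conjunct1]
lemmas Q5 = qt[unfolded quantaloid_def, THEN conjunct2, THEN conjunct2, THEN conjunct2, THEN conjunct2, THEN conjunct1]
lemmas Q6 = qt[unfolded quantaloid_def, THEN conjunct2, THEN conjunct2, THEN conjunct2, THEN conjunct2, THEN conjunct2, THEN conjunct1]
lemmas Q7 = qt[unfolded quantaloid_def, THEN conjunct2, THEN conjunct2, THEN conjunct2, THEN conjunct2, THEN conjunct2, THEN conjunct2, THEN conjunct1]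
lemmas Q8 = qt[unfolded quantaloid_def, THEN conjunct2, THEN conjunct2, THEN conjunct2, THEN conjunct2, THEN conjunct2, THEN conjunct2, THEN conjunct2, THEN conjunct1]
lemmas Q9 = qt[unfolded quantaloid_def, THEN conjunct2, THEN conjunct2, THEN conjunct2, THEN conjunct2, THEN conjunct2, THEN conjunct2, THEN conjunct2, THEN conjunct2, THEN conjunct1]
lemmas Q10 = qt[unfolded quantaloid_def, THEN conjunct2, THEN conjunct2, THEN conjunct2, THEN conjunct2, THEN conjunct2, THEN conjunct2, THEN conjunct2, THEN conjunct2, THEN conjunct2, THEN conjunct1]
lemmas Q11 = qt[unfolded quantaloid_def, THEN conjunct2, THEN conjunct2, THEN conjunct2, THEN conjunct2, THEN conjunct2, THEN conjunct2, THEN conjunct2, THEN conjunct2, THEN conjunct2, THEN conjunct2, THEN conjunct1]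
lemmas Q12 = qt[unfolded quantaloid_def, THEN conjunct2, THEN conjunct2, THEN conjunct2, THEN conjunct2, THEN conjunct2, THEN conjunct2, THEN conjunct2, THEN conjunct2, THEN conjunct2, THEN conjunct2, THEN conjunct2]
lemmas I1 = iq[unfolded involutive_quantaloid_def, THEN conjunct1]
lemmas I2 = iq[unfolded involutive_quantaloid_def, THEN conjunct2, THEN conjunct1]
lemmas I3 = iq[unfolded involutive_quantaloid_def, THEN conjunct2, THEN conjunct2, THEN conjunct1]
lemmas I4 = iq[unfolded involutive_quantaloid_def, THEN conjunct2, THEN conjunct2, THEN conjunct2, THEN conjunct1]
lemmas I5 = iq[unfolded involutive_quantaloid_def, THEN conjunct2, THEN conjunct2, THEN conjunct2, THEN conjunct2]

lemma hom_obs: "f \<in> hom X Y \<Longrightarrow> X \<in> obs \<and> Y \<in> obs" using Q1 by blast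
lemma hom_uniq: "f \<in> hom X Y \<Longrightarrow> f \<in> hom X' Y' \<Longrightarrow> X = X' \<and> Y = Y'" using Q2 by blast
lemma comp_hom: "f \<in> hom X Y \<Longrightarrow> g \<in> hom Y Z \<Longrightarrow> cmp g f \<in> hom X Z" using Q3 by blast
lemma assoc: "f \<in> hom W X \<Longrightarrow> g \<in> hom X Y \<Longrightarrow> h \<in> hom Y Z \<Longrightarrow> cmp h (cmp g f) = cmp (cmp h g) f"
  using Q4 by blast
lemma id_hom[intro]: "X \<in> obs \<Longrightarrow> one X \<in> hom X X" using Q5 by blast
lemma id_r[simp]: "f \<in> hom X Y \<Longrightarrow> cmp f (one X) = f" using Q6 by blast
lemma id_l[simp]: "f \<in> hom X Y \<Longrightarrow> cmp (one Y) f = f" using Q6 by blast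
lemma refl[intro]: "f \<in> hom X Y \<Longrightarrow> le f f" using Q7 by blast
lemma antisym: "f \<in> hom X Y \<Longrightarrow> g \<in> hom X Y \<Longrightarrow> le f g \<Longrightarrow> le g f \<Longrightarrow> f = g"
  using Q8 by blast
lemma trans: "f \<in> hom X Y \<Longrightarrow> g \<in> hom X Y \<Longrightarrow> h \<in> hom X Y \<Longrightarrow> le f g \<Longrightarrow> le g h \<Longrightarrow> le f h"
  using Q9 by blast
lemma lub_ex: "X \<in> obs \<Longrightarrow> Y \<in> obs \<Longrightarrow> S \<subseteq> hom X Y \<Longrightarrow> \<exists>s. is_lub Q X Y S s"
  using Q10 by blast
lemma sup_r: "f \<in> hom X Y \<Longrightarrow> S \<subseteq> hom Y Z \<Longrightarrow> cmp (qs Y Z S) f = qs X Z ((\<lambda>g. cmp g f) ` S)"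
  using Q11 by blast
lemma sup_l: "g \<in> hom Y Z \<Longrightarrow> S \<subseteq> hom X Y \<Longrightarrow> cmp g (qs X Y S) = qs X Z ((\<lambda>f. cmp g f) ` S)"
  using Q12 by blast

lemma inv_hom[intro]: "f \<in> hom X Y \<Longrightarrow> iv f \<in> hom Y X" using I2 by blast
lemma inv_mono: "f \<in> hom X Y \<Longrightarrow> g \<in> hom X Y \<Longrightarrow> le f g \<Longrightarrow> le (iv f) (iv g)"
  using I3 by blast
lemma inv_comp: "f \<in> hom X Y \<Longrightarrow> g \<in> hom Y Z \<Longrightarrow> iv (cmp g f) = cmp (iv f) (iv g)"
  using I4 by blast
lemma inv_inv[simp]: "f \<in> hom X Y \<Longrightarrow> iv (iv f) = f"
  using I5 by blast

lemma lub_unique: "is_lub Q X Y S s \<Longrightarrow> is_lub Q X Y S s' \<Longrightarrow> s = s'"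
  unfolding is_lub_def using antisym by blast

lemma sup_lub: "X \<in> obs \<Longrightarrow> Y \<in> obs \<Longrightarrow> S \<subseteq> hom X Y \<Longrightarrow> is_lub Q X Y S (qs X Y S)"
  unfolding qSup_def by (metis lub_ex lub_unique theI)

lemma sup_eq: "is_lub Q X Y S s \<Longrightarrow> qs X Y S = s"
  unfolding qSup_def using lub_unique by blast

lemma sup_hom[intro]: "X \<in> obs \<Longrightarrow> Y \<in> obs \<Longrightarrow> S \<subseteq> hom X Y \<Longrightarrow> qs X Y S \<in> hom X Y"
  using sup_lub[of X Y S] unfolding is_lub_def by blast
lemma sup_upper: "X \<in> obs \<Longrightarrow> Y \<in> obs \<Longrightarrow> S \<subseteq> hom X Y \<Longrightarrow> t \<in> S \<Longrightarrow> le t (qs X Y S)"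
  using sup_lub[of X Y S] unfolding is_lub_def by blast
lemma sup_least: "X \<in> obs \<Longrightarrow> Y \<in> obs \<Longrightarrow> S \<subseteq> hom X Y \<Longrightarrow> u \<in> hom X Y \<Longrightarrow> (\<And>t. t \<in> S \<Longrightarrow> le t u) \<Longrightarrow> le (qs X Y S) u"
  using sup_lub[of X Y S] unfolding is_lub_def by blast

lemma sup_ge: "X \<in> obs \<Longrightarrow> Y \<in> obs \<Longrightarrow> S \<subseteq> hom X Y \<Longrightarrow> t \<in> S \<Longrightarrow> f \<in> hom X Y \<Longrightarrow> le f t \<Longrightarrow> le f (qs X Y S)"
  by (meson sup_upper[of X Y S t] sup_hom[of X Y S] trans[of f X Y t] subsetD)

lemma sup_single: "f \<in> hom X Y \<Longrightarrow> qs X Y {f} = f"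
  by (rule sup_eq) (auto simp: is_lub_def)

lemma sup_two: "f \<in> hom X Y \<Longrightarrow> g \<in> hom X Y \<Longrightarrow> le f g \<Longrightarrow> qs X Y {f, g} = g"
  by (rule sup_eq) (auto simp: is_lub_def)

lemma mono_l: "g \<in> hom Y Z \<Longrightarrow> f \<in> hom X Y \<Longrightarrow> f' \<in> hom X Y \<Longrightarrow> le f f' \<Longrightarrow> le (cmp g f) (cmp g f')"
proof -
  assume a: "g \<in> hom Y Z" "f \<in> hom X Y" "f' \<in> hom X Y" "le f f'"
  have "cmp g f' = qs X Z ((\<lambda>f. cmp g f) ` {f, f'})" using sup_l[of g Y Z "{f,f'}" X] sup_two a by auto
  then show ?thesis using sup_upper[of X Z "(\<lambda>f. cmp g f) ` {f, f'}" "cmp g f"] a hom_obs comp_hom by auto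
qed

lemma mono_r: "f \<in> hom X Y \<Longrightarrow> g \<in> hom Y Z \<Longrightarrow> g' \<in> hom Y Z \<Longrightarrow> le g g' \<Longrightarrow> le (cmp g f) (cmp g' f)"
proof -
  assume a: "f \<in> hom X Y" "g \<in> hom Y Z" "g' \<in> hom Y Z" "le g g'"
  have "cmp g' f = qs X Z ((\<lambda>g. cmp g f) ` {g, g'})" using sup_r[of f X Y "{g,g'}" Z] sup_two a by auto
  then show ?thesis using sup_upper[of X Z "(\<lambda>g. cmp g f) ` {g, g'}" "cmp g f"] a hom_obs comp_hom by auto
qed

lemma mono2: "f \<in> hom X Y \<Longrightarrow> f' \<in> hom X Y \<Longrightarrow> g \<in> hom Y Z \<Longrightarrow> g' \<in> hom Y Z \<Longrightarrow> le f f' \<Longrightarrow> le g g' \<Longrightarrow> le (cmp g f) (cmp g' f')"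
proof -
  assume a: "f \<in> hom X Y" "f' \<in> hom X Y" "g \<in> hom Y Z" "g' \<in> hom Y Z" "le f f'" "le g g'"
  have 1: "le (cmp g f) (cmp g f')" using mono_l a by blast
  have 2: "le (cmp g f') (cmp g' f')" using mono_r a by blast
  show ?thesis using trans[OF comp_hom[OF a(1,3)] comp_hom[OF a(2,3)] comp_hom[OF a(2,4)] 1 2] .
qed

lemma inv_id[simp]: "X \<in> obs \<Longrightarrow> iv (one X) = one X"
proof -
  assume X: "X \<in> obs"
  have h: "iv (one X) \<in> hom X X" using X by auto
  have "iv (cmp (one X) (iv (one X))) = cmp (iv (iv (one X))) (iv (one X))" using inv_comp h X by blast
  also have "\<dots> = cmp (one X) (iv (one X))" using X id_hom inv_inv by metis
  finally have "iv (iv (one X)) = iv (one X)" using h id_l by metis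
  then show ?thesis using X id_hom inv_inv by metis
qed

lemma inv_sup: "X \<in> obs \<Longrightarrow> Y \<in> obs \<Longrightarrow> S \<subseteq> hom X Y \<Longrightarrow> iv (qs X Y S) = qs Y X (iv ` S)"
proof -
  assume a: "X \<in> obs" "Y \<in> obs" "S \<subseteq> hom X Y"
  have s: "qs X Y S \<in> hom X Y" using sup_hom[OF a] .
  have l: "is_lub Q Y X (iv ` S) (iv (qs X Y S))"
    unfolding is_lub_def
  proof (intro conjI ballI impI)
    show "iv (qs X Y S) \<in> hom Y X" using inv_hom[OF s] .
    fix t assume "t \<in> iv ` S" then obtain t0 where t0: "t0 \<in> S" "t = iv t0" by blast
    have "le t0 (qs X Y S)" using sup_upper[OF a t0(1)] .
    then show "le t (iv (qs X Y S))" using inv_mono[of t0 X Y "qs X Y S"] s t0 a(3) by blast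
  next
    fix u assume u: "u \<in> hom Y X" and b: "\<forall>t\<in>iv ` S. le t u"
    have iu: "iv u \<in> hom X Y" using inv_hom[OF u] .
    have "le (qs X Y S) (iv u)"
    proof (rule sup_least[OF a iu])
      fix t assume t: "t \<in> S"
      have th: "t \<in> hom X Y" using t a(3) by blast
      have "le (iv t) u" using b t by blast
      then have "le (iv (iv t)) (iv u)" using inv_mono[OF inv_hom[OF th] u] by blast
      then show "le t (iv u)" using inv_inv[OF th] by simp
    qed
    then have "le (iv (qs X Y S)) (iv (iv u))" using inv_mono[OF s iu] by blast
    then show "le (iv (qs X Y S)) u" using inv_inv[OF u] by simp
  qed
  show ?thesis using sup_eq[OF l] by simp
qed

lemma sup_comp_le: "Y \<in> obs \<Longrightarrow> Z \<in> obs \<Longrightarrow> S \<subseteq> hom Y Z \<Longrightarrow> f \<in> hom X Y \<Longrightarrow> u \<in> hom X Z \<Longrightarrow>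
   (\<And>s. s \<in> S \<Longrightarrow> le (cmp s f) u) \<Longrightarrow> le (cmp (qs Y Z S) f) u"
proof -
  assume a: "Y \<in> obs" "Z \<in> obs" "S \<subseteq> hom Y Z" "f \<in> hom X Y" "u \<in> hom X Z"
    and b: "\<And>s. s \<in> S \<Longrightarrow> le (cmp s f) u"
  have X: "X \<in> obs" using hom_obs[OF a(4)] by blast
  have e: "cmp (qs Y Z S) f = qs X Z ((\<lambda>g. cmp g f) ` S)" by (rule sup_r[OF a(4) a(3)])
  have sub: "(\<lambda>g. cmp g f) ` S \<subseteq> hom X Z" using comp_hom[OF a(4)] a(3) by blast
  show ?thesis unfolding e by (rule sup_least[OF X a(2) sub a(5)]) (use b in blast)
qed

lemma comp_sup_le: "X \<in> obs \<Longrightarrow> Y \<in> obs \<Longrightarrow> S \<subseteq> hom X Y \<Longrightarrow> g \<in> hom Y Z \<Longrightarrow> u \<in> hom X Z \<Longrightarrow>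
   (\<And>s. s \<in> S \<Longrightarrow> le (cmp g s) u) \<Longrightarrow> le (cmp g (qs X Y S)) u"
proof -
  assume a: "X \<in> obs" "Y \<in> obs" "S \<subseteq> hom X Y" "g \<in> hom Y Z" "u \<in> hom X Z"
    and b: "\<And>s. s \<in> S \<Longrightarrow> le (cmp g s) u"
  have Z: "Z \<in> obs" using hom_obs[OF a(4)] by blast
  have e: "cmp g (qs X Y S) = qs X Z ((\<lambda>f. cmp g f) ` S)" by (rule sup_l[OF a(4) a(3)])
  have sub: "(\<lambda>f. cmp g f) ` S \<subseteq> hom X Z" using comp_hom a(4) a(3) by blast
  show ?thesis unfolding e by (rule sup_least[OF a(1) Z sub a(5)]) (use b in blast)
qed

lemma sup_sup_le: "X \<in> obs \<Longrightarrow> Y \<in> obs \<Longrightarrow> Z \<in> obs \<Longrightarrow> S \<subseteq> hom Y Z \<Longrightarrow> T \<subseteq> hom X Y \<Longrightarrow> u \<in> hom X Z \<Longrightarrow>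
   (\<And>s t. s \<in> S \<Longrightarrow> t \<in> T \<Longrightarrow> le (cmp s t) u) \<Longrightarrow> le (cmp (qs Y Z S) (qs X Y T)) u"
proof -
  assume a: "X \<in> obs" "Y \<in> obs" "Z \<in> obs" "S \<subseteq> hom Y Z" "T \<subseteq> hom X Y" "u \<in> hom X Z"
    and b: "\<And>s t. s \<in> S \<Longrightarrow> t \<in> T \<Longrightarrow> le (cmp s t) u"
  show ?thesis
  proof (rule comp_sup_le[OF a(1,2,5) sup_hom[OF a(2,3,4)] a(6)])
    fix t assume t: "t \<in> T"
    show "le (cmp (qs Y Z S) t) u"
      by (rule sup_comp_le[OF a(2,3,4)]) (use t a b in blast)+
  qed
qed

end


definition spre :: "('o,'m) quantaloid \<Rightarrow> ('a,'o,'m) qcat \<Rightarrow> 'o \<Rightarrow> ('a \<Rightarrow> unit \<Rightarrow> 'm) \<Rightarrow> bool" where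
 "spre Q A X \<phi> \<longleftrightarrow> (\<forall>a\<in>c_ob A. \<phi> a () \<in> q_hom Q X (c_ty A a)) \<and>
   (\<forall>a\<in>c_ob A. \<forall>a'\<in>c_ob A. q_le Q (q_comp Q (c_hom A a' a) (\<phi> a ())) (\<phi> a' ())) \<and>
   q_le Q (q_id Q X) (qSup Q X X ((\<lambda>a. q_comp Q (q_inv Q (\<phi> a ())) (\<phi> a ())) ` c_ob A)) \<and>
   (\<forall>a\<in>c_ob A. \<forall>a'\<in>c_ob A. q_le Q (q_comp Q (\<phi> a' ()) (q_inv Q (\<phi> a ()))) (c_hom A a' a))"

definition Hs :: "('o,'m) quantaloid \<Rightarrow> ('a,'o,'m) qcat \<Rightarrow> 'o \<Rightarrow> ('a \<Rightarrow> unit \<Rightarrow> 'm) \<Rightarrow> 'o \<Rightarrow> ('a \<Rightarrow> unit \<Rightarrow> 'm) \<Rightarrow> 'm" where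
 "Hs Q A Y \<psi> X \<phi> = qSup Q X Y ((\<lambda>a. q_comp Q (q_inv Q (\<psi> a ())) (\<phi> a ())) ` c_ob A)"

context iq begin

lemma cty: "qcat Q B \<Longrightarrow> x \<in> c_ob B \<Longrightarrow> c_ty B x \<in> obs" unfolding qcat_def by blast
lemma chom: "qcat Q B \<Longrightarrow> x \<in> c_ob B \<Longrightarrow> y \<in> c_ob B \<Longrightarrow> c_hom B y x \<in> hom (c_ty B x) (c_ty B y)"
  unfolding qcat_def by blast
lemma ccomp: "qcat Q B \<Longrightarrow> x \<in> c_ob B \<Longrightarrow> y \<in> c_ob B \<Longrightarrow> z \<in> c_ob B \<Longrightarrow> le (cmp (c_hom B z y) (c_hom B y x)) (c_hom B z x)"
  unfolding qcat_def by blast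
lemma cid: "qcat Q B \<Longrightarrow> x \<in> c_ob B \<Longrightarrow> le (one (c_ty B x)) (c_hom B x x)"
  unfolding qcat_def by blast
lemma csym: "symcat Q B \<Longrightarrow> x \<in> c_ob B \<Longrightarrow> y \<in> c_ob B \<Longrightarrow> c_hom B x y = iv (c_hom B y x)"
  unfolding symcat_def by blast
lemma sq: "symcat Q B \<Longrightarrow> qcat Q B" unfolding symcat_def by blast

lemma sladj_unf: "sladj Q (ucat Q X) A \<phi> \<longleftrightarrow>
      (\<forall>y\<in>c_ob A. \<phi> y () \<in> hom X (c_ty A y)) \<and>
      (\<forall>y'\<in>c_ob A. \<forall>y\<in>c_ob A. le (cmp (c_hom A y' y) (\<phi> y ())) (\<phi> y' ())) \<and>
      (\<forall>y\<in>c_ob A. le (cmp (\<phi> y ()) (one X)) (\<phi> y ())) \<and>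
      (\<forall>x\<in>c_ob A. iv (\<phi> x ()) \<in> hom (c_ty A x) X) \<and>
      (\<forall>x\<in>c_ob A. le (cmp (one X) (iv (\<phi> x ()))) (iv (\<phi> x ()))) \<and>
      (\<forall>x\<in>c_ob A. \<forall>x'\<in>c_ob A. le (cmp (iv (\<phi> x ())) (c_hom A x x')) (iv (\<phi> x' ()))) \<and>
      le (one X) (qs X X ((\<lambda>x. cmp (iv (\<phi> x ())) (\<phi> x ())) ` c_ob A)) \<and>
      (\<forall>y\<in>c_ob A. \<forall>x\<in>c_ob A. le (qs (c_ty A x) (c_ty A y) {cmp (\<phi> y ()) (iv (\<phi> x ()))}) (c_hom A y x))"
  unfolding sladj_def ladj_def dist_def dle_def dcomp_def dop_def ucat_def by simp

lemma sladj_iff: assumes X: "X \<in> obs" and A: "symcat Q A"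
  shows "sladj Q (ucat Q X) A \<phi> \<longleftrightarrow> spre Q A X \<phi>"
proof
  assume "sladj Q (ucat Q X) A \<phi>"
  note h = this[unfolded sladj_unf]
  show "spre Q A X \<phi>" unfolding spre_def
  proof (intro conjI ballI)
    fix a assume a: "a \<in> c_ob A" show "\<phi> a () \<in> hom X (c_ty A a)" using h a by blast
  next
    fix a a' assume a: "a \<in> c_ob A" "a' \<in> c_ob A"
    show "le (cmp (c_hom A a' a) (\<phi> a ())) (\<phi> a' ())" using h a by blast
  next
    show "le (one X) (qs X X ((\<lambda>a. cmp (iv (\<phi> a ())) (\<phi> a ())) ` c_ob A))" using h by blast
  next
    fix a a' assume a: "a \<in> c_ob A" "a' \<in> c_ob A"
    have "\<phi> a' () \<in> hom X (c_ty A a')" "iv (\<phi> a ()) \<in> hom (c_ty A a) X" using h a by blast+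
    then have e: "qs (c_ty A a) (c_ty A a') {cmp (\<phi> a' ()) (iv (\<phi> a ()))} = cmp (\<phi> a' ()) (iv (\<phi> a ()))"
      using sup_single comp_hom by blast
    show "le (cmp (\<phi> a' ()) (iv (\<phi> a ()))) (c_hom A a' a)" using h a e by metis
  qed
next
  assume "spre Q A X \<phi>"
  note h = this[unfolded spre_def]
  have qA: "qcat Q A" using sq[OF A] .
  show "sladj Q (ucat Q X) A \<phi>" unfolding sladj_unf
  proof (intro conjI ballI)
    fix y assume "y \<in> c_ob A" then show "\<phi> y () \<in> hom X (c_ty A y)" using h by blast
  next
    fix y y' assume "y \<in> c_ob A" "y' \<in> c_ob A"
    then show "le (cmp (c_hom A y' y) (\<phi> y ())) (\<phi> y' ())" using h by blast
  next
    fix y assume "y \<in> c_ob A"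
    then have f: "\<phi> y () \<in> hom X (c_ty A y)" using h by blast
    then show "le (cmp (\<phi> y ()) (one X)) (\<phi> y ())" using id_r[OF f] refl[OF f] by simp
  next
    fix y assume "y \<in> c_ob A"
    then have f: "\<phi> y () \<in> hom X (c_ty A y)" using h by blast
    then show "iv (\<phi> y ()) \<in> hom (c_ty A y) X" using inv_hom by blast
  next
    fix y assume "y \<in> c_ob A"
    then have f: "\<phi> y () \<in> hom X (c_ty A y)" using h by blast
    then have f': "iv (\<phi> y ()) \<in> hom (c_ty A y) X" using inv_hom by blast
    then show "le (cmp (one X) (iv (\<phi> y ()))) (iv (\<phi> y ()))" using id_l[OF f'] refl[OF f'] by simp
  next
    fix x x' assume xs: "x \<in> c_ob A" "x' \<in> c_ob A"
    then have f: "\<phi> x () \<in> hom X (c_ty A x)" "\<phi> x' () \<in> hom X (c_ty A x')" using h by blast+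
    have g: "c_hom A x' x \<in> hom (c_ty A x) (c_ty A x')" using chom[OF qA xs] .
    have l: "le (cmp (c_hom A x' x) (\<phi> x ())) (\<phi> x' ())" using h xs by blast
    have "le (iv (cmp (c_hom A x' x) (\<phi> x ()))) (iv (\<phi> x' ()))"
      using inv_mono[OF comp_hom[OF f(1) g] f(2) l] .
    moreover have "iv (cmp (c_hom A x' x) (\<phi> x ())) = cmp (iv (\<phi> x ())) (c_hom A x x')"
      using inv_comp[OF f(1) g] csym[OF A xs(1) xs(2)] by simp
    ultimately show "le (cmp (iv (\<phi> x ())) (c_hom A x x')) (iv (\<phi> x' ()))" by simp
  next
    show "le (one X) (qs X X ((\<lambda>x. cmp (iv (\<phi> x ())) (\<phi> x ())) ` c_ob A))" using h by blast
  next
    fix y x assume a: "y \<in> c_ob A" "x \<in> c_ob A"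
    have "\<phi> y () \<in> hom X (c_ty A y)" "iv (\<phi> x ()) \<in> hom (c_ty A x) X" using h a inv_hom by blast+
    then have e: "qs (c_ty A x) (c_ty A y) {cmp (\<phi> y ()) (iv (\<phi> x ()))} = cmp (\<phi> y ()) (iv (\<phi> x ()))"
      using sup_single comp_hom by blast
    show "le (qs (c_ty A x) (c_ty A y) {cmp (\<phi> y ()) (iv (\<phi> x ()))}) (c_hom A y x)" unfolding e using h a by blast
  qed
qed

lemma ladj_D:
  assumes "ladj Q (ucat Q X) A \<phi> \<Psi>"
  shows "\<forall>x\<in>c_ob A. \<Psi> () x \<in> hom (c_ty A x) X"
    "\<forall>x\<in>c_ob A. \<forall>x'\<in>c_ob A. le (cmp (\<Psi> () x) (c_hom A x x')) (\<Psi> () x')"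
    "le (one X) (qs X X ((\<lambda>x. cmp (\<Psi> () x) (\<phi> x ())) ` c_ob A))"
    "\<forall>y\<in>c_ob A. \<forall>x\<in>c_ob A. le (qs (c_ty A x) (c_ty A y) {cmp (\<phi> y ()) (\<Psi> () x)}) (c_hom A y x)"
    "\<forall>y\<in>c_ob A. \<phi> y () \<in> hom X (c_ty A y)"
  using assms unfolding ladj_def dist_def dle_def dcomp_def ucat_def by simp_all

lemma radj_le:
  assumes X: "X \<in> obs" and A: "qcat Q A"
    and l1: "ladj Q (ucat Q X) A \<phi> \<Psi>1" and l2: "ladj Q (ucat Q X) A \<phi> \<Psi>2" and a: "a \<in> c_ob A"
  shows "le (\<Psi>1 () a) (\<Psi>2 () a)"
proof -
  note d1 = ladj_D[OF l1] and d2 = ladj_D[OF l2]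
  have ta: "c_ty A a \<in> obs" using cty[OF A a] .
  have p: "\<Psi>1 () a \<in> hom (c_ty A a) X" using d1(1) a by blast
  have p2: "\<Psi>2 () a \<in> hom (c_ty A a) X" using d2(1) a by blast
  define S where "S = (\<lambda>x. cmp (\<Psi>2 () x) (\<phi> x ())) ` c_ob A"
  have Ss: "S \<subseteq> hom X X" unfolding S_def using d2(1) d2(5) comp_hom by blast
  have s: "qs X X S \<in> hom X X" using sup_hom[OF X X Ss] .
  have 1: "le (cmp (one X) (\<Psi>1 () a)) (cmp (qs X X S) (\<Psi>1 () a))"
    using mono_r[OF p id_hom[OF X] s] d2(3) unfolding S_def by blast
  have 2: "le (cmp (qs X X S) (\<Psi>1 () a)) (\<Psi>2 () a)"
  proof (rule sup_comp_le[OF X X Ss p p2])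
    fix t assume "t \<in> S"
    then obtain b where b: "b \<in> c_ob A" "t = cmp (\<Psi>2 () b) (\<phi> b ())" unfolding S_def by blast
    have fb: "\<phi> b () \<in> hom X (c_ty A b)" using d2(5) b by blast
    have pb: "\<Psi>2 () b \<in> hom (c_ty A b) X" using d2(1) b by blast
    have fp: "cmp (\<phi> b ()) (\<Psi>1 () a) \<in> hom (c_ty A a) (c_ty A b)" using comp_hom[OF p fb] .
    have "qs (c_ty A a) (c_ty A b) {cmp (\<phi> b ()) (\<Psi>1 () a)} = cmp (\<phi> b ()) (\<Psi>1 () a)"
      using sup_single[OF fp] .
    then have le1: "le (cmp (\<phi> b ()) (\<Psi>1 () a)) (c_hom A b a)" using d1(4) a b(1) by metis
    have hb: "c_hom A b a \<in> hom (c_ty A a) (c_ty A b)" using chom[OF A a b(1)] .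
    have "le (cmp (\<Psi>2 () b) (cmp (\<phi> b ()) (\<Psi>1 () a))) (cmp (\<Psi>2 () b) (c_hom A b a))"
      using mono_l[OF pb fp hb le1] .
    moreover have "le (cmp (\<Psi>2 () b) (c_hom A b a)) (\<Psi>2 () a)" using d2(2) a b(1) by blast
    ultimately have "le (cmp (\<Psi>2 () b) (cmp (\<phi> b ()) (\<Psi>1 () a))) (\<Psi>2 () a)"
      using trans[OF comp_hom[OF fp pb] comp_hom[OF hb pb] p2] by blast
    then show "le (cmp t (\<Psi>1 () a)) (\<Psi>2 () a)" using b(2) assoc[OF p fb pb] by simp
  qed
  have "cmp (one X) (\<Psi>1 () a) = \<Psi>1 () a" using id_l[OF p] .
  then show ?thesis using trans[OF comp_hom[OF p id_hom[OF X]] comp_hom[OF p s] p2 1 2] by simp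
qed

lemma radj_eq:
  assumes X: "X \<in> obs" and A: "symcat Q A" and sl: "sladj Q (ucat Q X) A \<phi>"
  shows "radj Q (ucat Q X) A \<phi> = (\<lambda>u a. if a \<in> c_ob A then iv (\<phi> a ()) else undefined)"
proof -
  define R where "R = (\<lambda>(u::unit) a. if a \<in> c_ob A then iv (\<phi> a ()) else undefined)"
  have qA: "qcat Q A" using sq[OF A] .
  have l0: "ladj Q (ucat Q X) A \<phi> (dop Q \<phi>)" using sl unfolding sladj_def .
  have lR: "ladj Q (ucat Q X) A \<phi> R"
    using l0 unfolding ladj_def dist_def dle_def dcomp_def ucat_def R_def dop_def
    by (simp cong: image_cong)
  have dR: "dext A (ucat Q X) R" unfolding dext_def R_def ucat_def by simp
  have u: "\<Psi> = R" if "ladj Q (ucat Q X) A \<phi> \<Psi> \<and> dext A (ucat Q X) \<Psi>" for \<Psi>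
  proof (rule ext, rule ext)
    fix u :: unit and a
    show "\<Psi> u a = R u a"
    proof (cases "a \<in> c_ob A")
      case True
      have h1: "\<Psi> () a \<in> hom (c_ty A a) X" using ladj_D(1)[of X A \<phi> \<Psi>] that True by blast
      have h2: "R () a \<in> hom (c_ty A a) X" using ladj_D(1)[OF lR] True by blast
      have lP: "ladj Q (ucat Q X) A \<phi> \<Psi>" using that by blast
      have "\<Psi> () a = R () a" using antisym[OF h1 h2 radj_le[OF X qA lP lR True] radj_le[OF X qA lR lP True]] .
      then show ?thesis by simp
    next
      case False
      then show ?thesis using that unfolding dext_def R_def ucat_def by simp
    qed
  qed
  have "radj Q (ucat Q X) A \<phi> = R" unfolding radj_def
    by (rule the_equality) (use lR dR u in blast)+
  then show ?thesis unfolding R_def .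
qed

lemma sc_ob: assumes A: "symcat Q A"
  shows "(X, \<phi>) \<in> c_ob (symcompletion Q A) \<longleftrightarrow> X \<in> obs \<and> \<phi> \<in> extensional (c_ob A) \<and> spre Q A X \<phi>"
proof -
  have "(X, \<phi>) \<in> c_ob (symcompletion Q A) \<longleftrightarrow> X \<in> obs \<and> \<phi> \<in> extensional (c_ob A) \<and> sladj Q (ucat Q X) A \<phi>"
    unfolding symcompletion_def cauchy_def sladj_def by auto
  then show ?thesis using sladj_iff[OF _ A] by blast
qed

lemma sc_ty: "c_ty (symcompletion Q A) = fst"
  unfolding symcompletion_def cauchy_def by simp

lemma sc_hom: assumes A: "symcat Q A"
  and p: "(Y, \<psi>) \<in> c_ob (symcompletion Q A)" and q: "(X, \<phi>) \<in> c_ob (symcompletion Q A)"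
  shows "c_hom (symcompletion Q A) (Y, \<psi>) (X, \<phi>) = Hs Q A Y \<psi> X \<phi>"
proof -
  have Y: "Y \<in> obs" and sl: "sladj Q (ucat Q Y) A \<psi>" using p sc_ob[OF A] sladj_iff[OF _ A] by blast+
  have "c_hom (symcompletion Q A) (Y, \<psi>) (X, \<phi>) = dcomp Q (ucat Q X) A (ucat Q Y) (radj Q (ucat Q Y) A \<psi>) \<phi> () ()"
    unfolding symcompletion_def cauchy_def by simp
  also have "\<dots> = Hs Q A Y \<psi> X \<phi>"
    unfolding radj_eq[OF Y A sl] dcomp_def Hs_def by (simp add: ucat_def cong: image_cong)
  finally show ?thesis .
qed

end


context iq begin

lemma mid: "f \<in> hom W X \<Longrightarrow> g \<in> hom X Y \<Longrightarrow> h \<in> hom Y Z' \<Longrightarrow> k \<in> hom Z' Z \<Longrightarrow> m \<in> hom X Z' \<Longrightarrow>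
  le (cmp h g) m \<Longrightarrow> le (cmp (cmp k h) (cmp g f)) (cmp (cmp k m) f)"
proof -
  assume a: "f \<in> hom W X" "g \<in> hom X Y" "h \<in> hom Y Z'" "k \<in> hom Z' Z" "m \<in> hom X Z'" "le (cmp h g) m"
  have e1: "cmp (cmp k h) (cmp g f) = cmp k (cmp (cmp h g) f)"
    using assoc[OF comp_hom[OF a(1,2)] a(3,4)] assoc[OF a(1,2,3)] by simp
  have e2: "cmp (cmp k m) f = cmp k (cmp m f)" using assoc[OF a(1,5,4)] by simp
  have "le (cmp (cmp h g) f) (cmp m f)" using mono_r[OF a(1) comp_hom[OF a(2,3)] a(5,6)] .
  then have "le (cmp k (cmp (cmp h g) f)) (cmp k (cmp m f))"
    using mono_l[OF a(4) comp_hom[OF a(1) comp_hom[OF a(2,3)]] comp_hom[OF a(1,5)]] by blast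
  then show ?thesis using e1 e2 by simp
qed

lemma trans3: "a \<in> hom X Y \<Longrightarrow> b \<in> hom X Y \<Longrightarrow> c \<in> hom X Y \<Longrightarrow> d \<in> hom X Y \<Longrightarrow> le a b \<Longrightarrow> le b c \<Longrightarrow> le c d \<Longrightarrow> le a d"
  by (meson trans)

end

locale sa = iq Q for Q :: "('o,'m) quantaloid" + fixes A :: "('c,'o,'m) qcat" assumes A: "symcat Q A"
begin

abbreviation "ob \<equiv> c_ob A"
abbreviation "ty \<equiv> c_ty A"
abbreviation "ah \<equiv> c_hom A"
abbreviation "SC \<equiv> symcompletion Q A"
abbreviation "yo x \<equiv> restrict (\<lambda>y (_::unit). c_hom A y x) (c_ob A)"

lemma qA: "qcat Q A" using sq[OF A] .
lemma ty_obs: "a \<in> ob \<Longrightarrow> ty a \<in> obs" using cty[OF qA] .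
lemma ah_hom: "a \<in> ob \<Longrightarrow> b \<in> ob \<Longrightarrow> ah b a \<in> hom (ty a) (ty b)" using chom[OF qA] .
lemma ah_comp: "a \<in> ob \<Longrightarrow> b \<in> ob \<Longrightarrow> c \<in> ob \<Longrightarrow> le (cmp (ah c b) (ah b a)) (ah c a)" using ccomp[OF qA] .
lemma ah_id: "a \<in> ob \<Longrightarrow> le (one (ty a)) (ah a a)" using cid[OF qA] .
lemma ah_sym: "a \<in> ob \<Longrightarrow> b \<in> ob \<Longrightarrow> ah a b = iv (ah b a)" using csym[OF A] .

lemma sp_hom: "spre Q A X \<phi> \<Longrightarrow> a \<in> ob \<Longrightarrow> \<phi> a () \<in> hom X (ty a)" unfolding spre_def by blast
lemma sp_ihom: "spre Q A X \<phi> \<Longrightarrow> a \<in> ob \<Longrightarrow> iv (\<phi> a ()) \<in> hom (ty a) X" using sp_hom inv_hom by blast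
lemma sp_dist: "spre Q A X \<phi> \<Longrightarrow> a \<in> ob \<Longrightarrow> a' \<in> ob \<Longrightarrow> le (cmp (ah a' a) (\<phi> a ())) (\<phi> a' ())" unfolding spre_def by blast
lemma sp_unit: "spre Q A X \<phi> \<Longrightarrow> le (one X) (qs X X ((\<lambda>a. cmp (iv (\<phi> a ())) (\<phi> a ())) ` ob))" unfolding spre_def by blast
lemma sp_counit: "spre Q A X \<phi> \<Longrightarrow> a \<in> ob \<Longrightarrow> a' \<in> ob \<Longrightarrow> le (cmp (\<phi> a' ()) (iv (\<phi> a ()))) (ah a' a)" unfolding spre_def by blast
lemma sp_idist: "spre Q A X \<phi> \<Longrightarrow> a \<in> ob \<Longrightarrow> a' \<in> ob \<Longrightarrow> le (cmp (iv (\<phi> a ())) (ah a a')) (iv (\<phi> a' ()))"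
proof -
  assume s: "spre Q A X \<phi>" and a: "a \<in> ob" "a' \<in> ob"
  have f: "\<phi> a () \<in> hom X (ty a)" "\<phi> a' () \<in> hom X (ty a')" using sp_hom[OF s] a by blast+
  have g: "ah a' a \<in> hom (ty a) (ty a')" using ah_hom a by blast
  have "le (iv (cmp (ah a' a) (\<phi> a ()))) (iv (\<phi> a' ()))"
    using inv_mono[OF comp_hom[OF f(1) g] f(2) sp_dist[OF s a]] .
  moreover have "iv (cmp (ah a' a) (\<phi> a ())) = cmp (iv (\<phi> a ())) (ah a a')"
    using inv_comp[OF f(1) g] ah_sym[OF a(1) a(2)] by simp
  ultimately show ?thesis by simp
qed
lemma sp_X: "spre Q A X \<phi> \<Longrightarrow> a \<in> ob \<Longrightarrow> X \<in> obs" using sp_hom hom_obs by blast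

lemma sub_H: "spre Q A Y \<psi> \<Longrightarrow> spre Q A X \<phi> \<Longrightarrow> (\<lambda>a. cmp (iv (\<psi> a ())) (\<phi> a ())) ` ob \<subseteq> hom X Y"
  using sp_hom sp_ihom comp_hom by blast

lemma H_hom: "X \<in> obs \<Longrightarrow> Y \<in> obs \<Longrightarrow> spre Q A Y \<psi> \<Longrightarrow> spre Q A X \<phi> \<Longrightarrow> Hs Q A Y \<psi> X \<phi> \<in> hom X Y"
  unfolding Hs_def using sup_hom sub_H by blast

lemma H_upper: "X \<in> obs \<Longrightarrow> Y \<in> obs \<Longrightarrow> spre Q A Y \<psi> \<Longrightarrow> spre Q A X \<phi> \<Longrightarrow> a \<in> ob \<Longrightarrow>
   le (cmp (iv (\<psi> a ())) (\<phi> a ())) (Hs Q A Y \<psi> X \<phi>)"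
  unfolding Hs_def using sup_upper[OF _ _ sub_H] by blast

lemma H_least: "X \<in> obs \<Longrightarrow> Y \<in> obs \<Longrightarrow> spre Q A Y \<psi> \<Longrightarrow> spre Q A X \<phi> \<Longrightarrow> u \<in> hom X Y \<Longrightarrow>
   (\<And>a. a \<in> ob \<Longrightarrow> le (cmp (iv (\<psi> a ())) (\<phi> a ())) u) \<Longrightarrow> le (Hs Q A Y \<psi> X \<phi>) u"
  unfolding Hs_def by (rule sup_least[OF _ _ sub_H]) blast+

lemma H_sym: assumes X: "X \<in> obs" and Y: "Y \<in> obs" and s: "spre Q A Y \<psi>" "spre Q A X \<phi>"
  shows "Hs Q A X \<phi> Y \<psi> = iv (Hs Q A Y \<psi> X \<phi>)"
proof -
  have "iv (Hs Q A Y \<psi> X \<phi>) = qs Y X (iv ` (\<lambda>a. cmp (iv (\<psi> a ())) (\<phi> a ())) ` ob)"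
    unfolding Hs_def using inv_sup[OF X Y sub_H[OF s]] .
  also have "iv ` (\<lambda>a. cmp (iv (\<psi> a ())) (\<phi> a ())) ` ob = (\<lambda>a. cmp (iv (\<phi> a ())) (\<psi> a ())) ` ob"
  proof -
    have "iv (cmp (iv (\<psi> a ())) (\<phi> a ())) = cmp (iv (\<phi> a ())) (\<psi> a ())" if a: "a \<in> ob" for a
      using inv_comp[OF sp_hom[OF s(2) a] sp_ihom[OF s(1) a]] inv_inv[OF sp_hom[OF s(1) a]] by simp
    then show ?thesis unfolding image_image by (rule image_cong[OF HOL.refl])
  qed
  finally show ?thesis unfolding Hs_def by simp
qed

lemma H_comp: assumes X: "X \<in> obs" and Y: "Y \<in> obs" and Z: "Z \<in> obs"
  and s: "spre Q A Z \<rho>" "spre Q A Y \<psi>" "spre Q A X \<phi>"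
  shows "le (cmp (Hs Q A Z \<rho> Y \<psi>) (Hs Q A Y \<psi> X \<phi>)) (Hs Q A Z \<rho> X \<phi>)"
  unfolding Hs_def
proof (rule sup_sup_le[OF X Y Z sub_H[OF s(1,2)] sub_H[OF s(2,3)] H_hom[OF X Z s(1,3), unfolded Hs_def]])
  fix u t assume "u \<in> (\<lambda>a. cmp (iv (\<rho> a ())) (\<psi> a ())) ` ob" "t \<in> (\<lambda>a. cmp (iv (\<psi> a ())) (\<phi> a ())) ` ob"
  then obtain a b where ab: "a \<in> ob" "b \<in> ob" "u = cmp (iv (\<rho> a ())) (\<psi> a ())" "t = cmp (iv (\<psi> b ())) (\<phi> b ())" by blast
  have fb: "\<phi> b () \<in> hom X (ty b)" using sp_hom[OF s(3) ab(2)] .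
  have pb: "iv (\<psi> b ()) \<in> hom (ty b) Y" using sp_ihom[OF s(2) ab(2)] .
  have pa: "\<psi> a () \<in> hom Y (ty a)" using sp_hom[OF s(2) ab(1)] .
  have ra: "iv (\<rho> a ()) \<in> hom (ty a) Z" using sp_ihom[OF s(1) ab(1)] .
  have rb: "iv (\<rho> b ()) \<in> hom (ty b) Z" using sp_ihom[OF s(1) ab(2)] .
  have hab: "ah a b \<in> hom (ty b) (ty a)" using ah_hom[OF ab(2,1)] .
  have th: "t \<in> hom X Y" unfolding ab(4) using comp_hom[OF fb pb] .
  have uh: "u \<in> hom Y Z" unfolding ab(3) using comp_hom[OF pa ra] .
  have 1: "le (cmp u t) (cmp (cmp (iv (\<rho> a ())) (ah a b)) (\<phi> b ()))"
    unfolding ab(3,4) by (rule mid[OF fb pb pa ra hab sp_counit[OF s(2) ab(2,1)]])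
  have 2: "le (cmp (cmp (iv (\<rho> a ())) (ah a b)) (\<phi> b ())) (cmp (iv (\<rho> b ())) (\<phi> b ()))"
    by (rule mono_r[OF fb comp_hom[OF hab ra] rb sp_idist[OF s(1) ab(1,2)]])
  have 3: "le (cmp (iv (\<rho> b ())) (\<phi> b ())) (Hs Q A Z \<rho> X \<phi>)" using H_upper[OF X Z s(1,3) ab(2)] .
  show "le (cmp u t) (qs X Z ((\<lambda>a. cmp (iv (\<rho> a ())) (\<phi> a ())) ` ob))"
    using trans3[OF comp_hom[OF th uh] comp_hom[OF fb comp_hom[OF hab ra]] comp_hom[OF fb rb] H_hom[OF X Z s(1,3)] 1 2 3]
    unfolding Hs_def .
qed

end


context sa begin

lemma yo_app: "a \<in> ob \<Longrightarrow> yo x a () = ah a x" by simp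

lemma yo_spre: assumes x: "x \<in> ob" shows "spre Q A (ty x) (yo x)"
  unfolding spre_def
proof (intro conjI ballI)
  fix a assume a: "a \<in> ob" show "yo x a () \<in> hom (ty x) (ty a)" using a ah_hom[OF x a] by simp
next
  fix a a' assume a: "a \<in> ob" "a' \<in> ob"
  show "le (cmp (ah a' a) (yo x a ())) (yo x a' ())" using a ah_comp[OF x a(1) a(2)] by simp
next
  fix a a' assume a: "a \<in> ob" "a' \<in> ob"
  show "le (cmp (yo x a' ()) (iv (yo x a ()))) (ah a' a)" using a ah_comp[OF a(1) x a(2)] ah_sym[OF x a(1)] by simp
next
  have tx: "ty x \<in> obs" using ty_obs[OF x] .
  have hx: "ah x x \<in> hom (ty x) (ty x)" using ah_hom[OF x x] .
  have sub: "(\<lambda>a. cmp (iv (yo x a ())) (yo x a ())) ` ob \<subseteq> hom (ty x) (ty x)"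
  proof
    fix t assume "t \<in> (\<lambda>a. cmp (iv (yo x a ())) (yo x a ())) ` ob"
    then obtain a where a: "a \<in> ob" "t = cmp (iv (yo x a ())) (yo x a ())" by blast
    have h: "ah a x \<in> hom (ty x) (ty a)" using ah_hom[OF x a(1)] .
    show "t \<in> hom (ty x) (ty x)" using a comp_hom[OF h inv_hom[OF h]] by simp
  qed
  have "le (cmp (one (ty x)) (one (ty x))) (cmp (ah x x) (ah x x))"
    using mono2[OF id_hom[OF tx] hx id_hom[OF tx] hx ah_id[OF x] ah_id[OF x]] .
  moreover have "cmp (ah x x) (ah x x) = cmp (iv (yo x x ())) (yo x x ())" using ah_sym[OF x x] x by simp
  ultimately have "le (one (ty x)) (cmp (iv (yo x x ())) (yo x x ()))" using id_l[OF id_hom[OF tx]] by simp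
  then show "le (one (ty x)) (qs (ty x) (ty x) ((\<lambda>a. cmp (iv (yo x a ())) (yo x a ())) ` ob))"
    using sup_ge[OF tx tx sub _ id_hom[OF tx]] x by blast
qed

lemma yo_ob: "x \<in> ob \<Longrightarrow> yoneda Q A x \<in> c_ob SC"
  unfolding yoneda_def using sc_ob[OF A] ty_obs yo_spre by simp

lemma H_yo_l: assumes X: "X \<in> obs" and s: "spre Q A X \<phi>" and x: "x \<in> ob"
  shows "Hs Q A (ty x) (yo x) X \<phi> = \<phi> x ()"
proof (rule antisym[OF H_hom[OF X ty_obs[OF x] yo_spre[OF x] s] sp_hom[OF s x]])
  show "le (Hs Q A (ty x) (yo x) X \<phi>) (\<phi> x ())"
  proof (rule H_least[OF X ty_obs[OF x] yo_spre[OF x] s sp_hom[OF s x]])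
    fix a assume a: "a \<in> ob"
    show "le (cmp (iv (yo x a ())) (\<phi> a ())) (\<phi> x ())" using sp_dist[OF s a x] ah_sym[OF x a] a by simp
  qed
next
  have hx: "ah x x \<in> hom (ty x) (ty x)" using ah_hom[OF x x] .
  have "le (cmp (one (ty x)) (\<phi> x ())) (cmp (ah x x) (\<phi> x ()))"
    using mono_r[OF sp_hom[OF s x] id_hom[OF ty_obs[OF x]] hx ah_id[OF x]] .
  then have 1: "le (\<phi> x ()) (cmp (iv (yo x x ())) (\<phi> x ()))" using id_l[OF sp_hom[OF s x]] ah_sym[OF x x] x by simp
  show "le (\<phi> x ()) (Hs Q A (ty x) (yo x) X \<phi>)"
    using trans[OF sp_hom[OF s x] _ H_hom[OF X ty_obs[OF x] yo_spre[OF x] s] 1 H_upper[OF X ty_obs[OF x] yo_spre[OF x] s x]]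
      comp_hom[OF sp_hom[OF s x] hx] ah_sym[OF x x] x by simp
qed

lemma H_yo_r: assumes Y: "Y \<in> obs" and s: "spre Q A Y \<psi>" and x: "x \<in> ob"
  shows "Hs Q A Y \<psi> (ty x) (yo x) = iv (\<psi> x ())"
  using H_sym[OF Y ty_obs[OF x] yo_spre[OF x] s] H_yo_l[OF Y s x] by simp

lemma sc_cases: "p \<in> c_ob SC \<Longrightarrow> (\<And>X \<phi>. p = (X, \<phi>) \<Longrightarrow> X \<in> obs \<Longrightarrow> \<phi> \<in> extensional ob \<Longrightarrow> spre Q A X \<phi> \<Longrightarrow> P) \<Longrightarrow> P"
  using sc_ob[OF A] by (cases p) blast

lemma sc_qcat: "qcat Q SC"
  unfolding qcat_def
proof (intro conjI ballI)
  fix x assume "x \<in> c_ob SC" then show "c_ty SC x \<in> obs" by (rule sc_cases) (simp add: sc_ty)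
next
  fix x y assume x: "x \<in> c_ob SC" and y: "y \<in> c_ob SC"
  obtain X \<phi> where 1: "x = (X, \<phi>)" "X \<in> obs" "spre Q A X \<phi>" using x by (rule sc_cases)
  obtain Y \<psi> where 2: "y = (Y, \<psi>)" "Y \<in> obs" "spre Q A Y \<psi>" using y by (rule sc_cases)
  have "c_hom SC y x = Hs Q A Y \<psi> X \<phi>" using sc_hom[OF A] x y 1 2 by simp
  then show "c_hom SC y x \<in> hom (c_ty SC x) (c_ty SC y)"
    using H_hom[OF 1(2) 2(2) 2(3) 1(3)] 1 2 by (simp add: sc_ty)
next
  fix x y z assume x: "x \<in> c_ob SC" and y: "y \<in> c_ob SC" and z: "z \<in> c_ob SC"
  obtain X \<phi> where 1: "x = (X, \<phi>)" "X \<in> obs" "spre Q A X \<phi>" using x by (rule sc_cases)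
  obtain Y \<psi> where 2: "y = (Y, \<psi>)" "Y \<in> obs" "spre Q A Y \<psi>" using y by (rule sc_cases)
  obtain Z \<rho> where 3: "z = (Z, \<rho>)" "Z \<in> obs" "spre Q A Z \<rho>" using z by (rule sc_cases)
  have "c_hom SC y x = Hs Q A Y \<psi> X \<phi>" "c_hom SC z y = Hs Q A Z \<rho> Y \<psi>" "c_hom SC z x = Hs Q A Z \<rho> X \<phi>"
    using sc_hom[OF A] x y z 1 2 3 by simp_all
  then show "le (cmp (c_hom SC z y) (c_hom SC y x)) (c_hom SC z x)"
    using H_comp[OF 1(2) 2(2) 3(2) 3(3) 2(3) 1(3)] by simp
next
  fix x assume x: "x \<in> c_ob SC"
  obtain X \<phi> where 1: "x = (X, \<phi>)" "X \<in> obs" "spre Q A X \<phi>" using x by (rule sc_cases)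
  have "c_hom SC x x = Hs Q A X \<phi> X \<phi>" using sc_hom[OF A] x 1 by simp
  then show "le (one (c_ty SC x)) (c_hom SC x x)"
    using sp_unit[OF 1(3)] 1 by (simp add: sc_ty Hs_def)
qed

lemma sc_sym: "symcat Q SC"
  unfolding symcat_def
proof (intro conjI ballI sc_qcat)
  fix x y assume x: "x \<in> c_ob SC" and y: "y \<in> c_ob SC"
  obtain X \<phi> where 1: "x = (X, \<phi>)" "X \<in> obs" "spre Q A X \<phi>" using x by (rule sc_cases)
  obtain Y \<psi> where 2: "y = (Y, \<psi>)" "Y \<in> obs" "spre Q A Y \<psi>" using y by (rule sc_cases)
  have "c_hom SC y x = Hs Q A Y \<psi> X \<phi>" "c_hom SC x y = Hs Q A X \<phi> Y \<psi>" using sc_hom[OF A] x y 1 2 by simp_all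
  then show "c_hom SC x y = iv (c_hom SC y x)" using H_sym[OF 1(2) 2(2) 2(3) 1(3)] by simp
qed

lemma yo_fun: "qfunctor Q A SC (yoneda Q A)"
  unfolding qfunctor_def
proof (intro conjI ballI)
  fix x assume x: "x \<in> ob"
  show "yoneda Q A x \<in> c_ob SC" using yo_ob[OF x] .
  show "c_ty SC (yoneda Q A x) = ty x" by (simp add: sc_ty yoneda_def)
next
  fix x y assume x: "x \<in> ob" and y: "y \<in> ob"
  have "c_hom SC (yoneda Q A y) (yoneda Q A x) = ah y x"
    using sc_hom[OF A yo_ob[OF y, unfolded yoneda_def] yo_ob[OF x, unfolded yoneda_def]]
      H_yo_l[OF ty_obs[OF x] yo_spre[OF x] y] y by (simp add: yoneda_def)
  then show "le (ah y x) (c_hom SC (yoneda Q A y) (yoneda Q A x))" using refl[OF ah_hom[OF x y]] by simp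
qed

end


context sa begin

lemma hYY: "a \<in> ob \<Longrightarrow> b \<in> ob \<Longrightarrow> c_hom SC (yoneda Q A b) (yoneda Q A a) = ah b a"
  using sc_hom[OF A yo_ob[unfolded yoneda_def] yo_ob[unfolded yoneda_def]] H_yo_l[OF ty_obs yo_spre]
  by (simp add: yoneda_def)

lemma hpY: "(Z, \<psi>) \<in> c_ob SC \<Longrightarrow> a \<in> ob \<Longrightarrow> c_hom SC (Z, \<psi>) (yoneda Q A a) = iv (\<psi> a ())"
  using sc_hom[OF A _ yo_ob[unfolded yoneda_def]] H_yo_r sc_ob[OF A] by (simp add: yoneda_def)

lemma hYp: "(Z, \<psi>) \<in> c_ob SC \<Longrightarrow> a \<in> ob \<Longrightarrow> c_hom SC (yoneda Q A a) (Z, \<psi>) = \<psi> a ()"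
  using sc_hom[OF A yo_ob[unfolded yoneda_def]] H_yo_l sc_ob[OF A] by (simp add: yoneda_def)

lemma tyY: "c_ty SC (yoneda Q A a) = ty a" by (simp add: sc_ty yoneda_def)

context fixes X \<Phi> assumes X: "X \<in> obs" and s: "spre Q SC X \<Phi>"
begin

definition "ff a = \<Phi> (yoneda Q A a) ()"

lemma S1: "p \<in> c_ob SC \<Longrightarrow> \<Phi> p () \<in> hom X (c_ty SC p)" using s unfolding spre_def by blast
lemma S2: "p \<in> c_ob SC \<Longrightarrow> q \<in> c_ob SC \<Longrightarrow> le (cmp (c_hom SC q p) (\<Phi> p ())) (\<Phi> q ())" using s unfolding spre_def by blast
lemma S3: "le (one X) (qs X X ((\<lambda>p. cmp (iv (\<Phi> p ())) (\<Phi> p ())) ` c_ob SC))" using s unfolding spre_def by blast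
lemma S4: "p \<in> c_ob SC \<Longrightarrow> q \<in> c_ob SC \<Longrightarrow> le (cmp (\<Phi> q ()) (iv (\<Phi> p ()))) (c_hom SC q p)" using s unfolding spre_def by blast

lemma fh: "a \<in> ob \<Longrightarrow> ff a \<in> hom X (ty a)" unfolding ff_def using S1[OF yo_ob] tyY by metis

lemma fsub: "(\<lambda>a. cmp (iv (ff a)) (ff a)) ` ob \<subseteq> hom X X"
proof
  fix t assume "t \<in> (\<lambda>a. cmp (iv (ff a)) (ff a)) ` ob"
  then obtain a where a: "a \<in> ob" "t = cmp (iv (ff a)) (ff a)" by blast
  show "t \<in> hom X X" using a comp_hom[OF fh[OF a(1)] inv_hom[OF fh[OF a(1)]]] by simp
qed

lemma psi_g: assumes p: "(Z, \<psi>) \<in> c_ob SC" and a: "a \<in> ob"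
  shows "le (cmp (\<psi> a ()) (\<Phi> (Z, \<psi>) ())) (ff a)"
  using S2[OF p yo_ob[OF a]] hYp[OF p a] unfolding ff_def by simp

lemma unit_f: "le (one X) (qs X X ((\<lambda>a. cmp (iv (ff a)) (ff a)) ` ob))"
proof -
  let ?U = "qs X X ((\<lambda>a. cmp (iv (ff a)) (ff a)) ` ob)"
  have Uh: "?U \<in> hom X X" using sup_hom[OF X X fsub] .
  have sub2: "(\<lambda>p. cmp (iv (\<Phi> p ())) (\<Phi> p ())) ` c_ob SC \<subseteq> hom X X"
  proof
    fix t assume "t \<in> (\<lambda>p. cmp (iv (\<Phi> p ())) (\<Phi> p ())) ` c_ob SC"
    then obtain p where p: "p \<in> c_ob SC" "t = cmp (iv (\<Phi> p ())) (\<Phi> p ())" by blast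
    show "t \<in> hom X X" using p comp_hom[OF S1[OF p(1)] inv_hom[OF S1[OF p(1)]]] by simp
  qed
  have "le (qs X X ((\<lambda>p. cmp (iv (\<Phi> p ())) (\<Phi> p ())) ` c_ob SC)) ?U"
  proof (rule sup_least[OF X X sub2 Uh])
    fix t assume "t \<in> (\<lambda>p. cmp (iv (\<Phi> p ())) (\<Phi> p ())) ` c_ob SC"
    then obtain p where p: "p \<in> c_ob SC" "t = cmp (iv (\<Phi> p ())) (\<Phi> p ())" by blast
    obtain Z \<psi> where z: "p = (Z, \<psi>)" "Z \<in> obs" "spre Q A Z \<psi>" using p(1) by (rule sc_cases)
    have pz: "(Z, \<psi>) \<in> c_ob SC" using p z by simp
    define g where "g = \<Phi> (Z, \<psi>) ()"
    have gh: "g \<in> hom X Z" using S1[OF pz] unfolding g_def by (simp add: sc_ty)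
    have ig: "iv g \<in> hom Z X" using inv_hom[OF gh] .
    define T where "T = (\<lambda>a. cmp (iv (\<psi> a ())) (\<psi> a ())) ` ob"
    have Tsub: "T \<subseteq> hom Z Z" unfolding T_def using sub_H[OF z(3) z(3)] .
    have Th: "qs Z Z T \<in> hom Z Z" using sup_hom[OF z(2) z(2) Tsub] .
    have u: "le (one Z) (qs Z Z T)" using sp_unit[OF z(3)] unfolding T_def .
    have 1: "le g (cmp (qs Z Z T) g)"
      using mono_r[OF gh id_hom[OF z(2)] Th u] id_l[OF gh] by simp
    have 2: "le (cmp (iv g) g) (cmp (iv g) (cmp (qs Z Z T) g))"
      using mono_l[OF ig gh comp_hom[OF gh Th] 1] .
    have 3: "le (cmp (iv g) (cmp (qs Z Z T) g)) ?U"
    proof -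
      have e: "cmp (qs Z Z T) g = qs X Z ((\<lambda>s. cmp s g) ` T)" using sup_r[OF gh Tsub] .
      have sub3: "(\<lambda>s. cmp s g) ` T \<subseteq> hom X Z" using Tsub comp_hom[OF gh] by blast
      show ?thesis unfolding e
      proof (rule comp_sup_le[OF X z(2) sub3 ig Uh])
        fix r assume "r \<in> (\<lambda>s. cmp s g) ` T"
        then obtain a where a: "a \<in> ob" "r = cmp (cmp (iv (\<psi> a ())) (\<psi> a ())) g" unfolding T_def by blast
        have pa: "\<psi> a () \<in> hom Z (ty a)" using sp_hom[OF z(3) a(1)] .
        have ipa: "iv (\<psi> a ()) \<in> hom (ty a) Z" using inv_hom[OF pa] .
        have pg: "cmp (\<psi> a ()) g \<in> hom X (ty a)" using comp_hom[OF gh pa] .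
        have "cmp (iv g) r = cmp (iv g) (cmp (iv (\<psi> a ())) (cmp (\<psi> a ()) g))"
          using a(2) assoc[OF gh pa ipa] by simp
        also have "\<dots> = cmp (cmp (iv g) (iv (\<psi> a ()))) (cmp (\<psi> a ()) g)"
          using assoc[OF pg ipa ig] by simp
        also have "\<dots> = cmp (iv (cmp (\<psi> a ()) g)) (cmp (\<psi> a ()) g)"
          using inv_comp[OF gh pa] by simp
        finally have e2: "cmp (iv g) r = cmp (iv (cmp (\<psi> a ()) g)) (cmp (\<psi> a ()) g)" .
        have l: "le (cmp (\<psi> a ()) g) (ff a)" using psi_g[OF pz a(1)] unfolding g_def .
        have "le (cmp (iv (cmp (\<psi> a ()) g)) (cmp (\<psi> a ()) g)) (cmp (iv (ff a)) (ff a))"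
          using mono2[OF pg fh[OF a(1)] inv_hom[OF pg] inv_hom[OF fh[OF a(1)]] l inv_mono[OF pg fh[OF a(1)] l]] .
        moreover have "le (cmp (iv (ff a)) (ff a)) ?U" using sup_upper[OF X X fsub] a(1) by blast
        ultimately show "le (cmp (iv g) r) ?U" unfolding e2
          using trans[OF comp_hom[OF pg inv_hom[OF pg]] comp_hom[OF fh[OF a(1)] inv_hom[OF fh[OF a(1)]]] Uh] by blast
      qed
    qed
    show "le t ?U" unfolding p(2) z(1) g_def[symmetric]
      using trans[OF comp_hom[OF gh ig] comp_hom[OF comp_hom[OF gh Th] ig] Uh 2 3] .
  qed
  then show ?thesis using trans[OF id_hom[OF X] sup_hom[OF X X sub2] Uh S3] by blast
qed

definition "phi = restrict (\<lambda>a (_::unit). ff a) ob"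

lemma phi_app: "a \<in> ob \<Longrightarrow> phi a () = ff a" unfolding phi_def by simp

lemma spre_phi: "spre Q A X phi"
  unfolding spre_def
proof (intro conjI ballI)
  fix a assume a: "a \<in> ob" show "phi a () \<in> hom X (ty a)" using fh[OF a] phi_app[OF a] by simp
next
  fix a a' assume a: "a \<in> ob" "a' \<in> ob"
  show "le (cmp (ah a' a) (phi a ())) (phi a' ())"
    using S2[OF yo_ob[OF a(1)] yo_ob[OF a(2)]] hYY[OF a] phi_app a unfolding ff_def by simp
next
  fix a a' assume a: "a \<in> ob" "a' \<in> ob"
  show "le (cmp (phi a' ()) (iv (phi a ()))) (ah a' a)"
    using S4[OF yo_ob[OF a(1)] yo_ob[OF a(2)]] hYY[OF a] phi_app a unfolding ff_def by simp
next
  have "(\<lambda>a. cmp (iv (phi a ())) (phi a ())) ` ob = (\<lambda>a. cmp (iv (ff a)) (ff a)) ` ob"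
    by (rule image_cong[OF HOL.refl]) (simp add: phi_app)
  then show "le (one X) (qs X X ((\<lambda>a. cmp (iv (phi a ())) (phi a ())) ` ob))" using unit_f by simp
qed

lemma key: assumes p: "(Z, \<psi>) \<in> c_ob SC" shows "\<Phi> (Z, \<psi>) () = Hs Q A Z \<psi> X phi"
proof -
  have z: "Z \<in> obs" "spre Q A Z \<psi>" using p sc_ob[OF A] by blast+
  define g where "g = \<Phi> (Z, \<psi>) ()"
  have gh: "g \<in> hom X Z" using S1[OF p] unfolding g_def by (simp add: sc_ty)
  have Hh: "Hs Q A Z \<psi> X phi \<in> hom X Z" using H_hom[OF X z(1) z(2) spre_phi] .
  have 1: "le (Hs Q A Z \<psi> X phi) g"
  proof (rule H_least[OF X z(1) z(2) spre_phi gh])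
    fix a assume a: "a \<in> ob"
    show "le (cmp (iv (\<psi> a ())) (phi a ())) g"
      using S2[OF yo_ob[OF a] p] hpY[OF p a] phi_app[OF a] unfolding g_def ff_def by simp
  qed
  define T where "T = (\<lambda>a. cmp (iv (\<psi> a ())) (\<psi> a ())) ` ob"
  have Tsub: "T \<subseteq> hom Z Z" unfolding T_def using sub_H[OF z(2) z(2)] .
  have Th: "qs Z Z T \<in> hom Z Z" using sup_hom[OF z(1) z(1) Tsub] .
  have u: "le (one Z) (qs Z Z T)" using sp_unit[OF z(2)] unfolding T_def .
  have 2: "le g (cmp (qs Z Z T) g)"
    using mono_r[OF gh id_hom[OF z(1)] Th u] id_l[OF gh] by simp
  have 3: "le (cmp (qs Z Z T) g) (Hs Q A Z \<psi> X phi)"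
  proof (rule sup_comp_le[OF z(1) z(1) Tsub gh Hh])
    fix t assume "t \<in> T"
    then obtain a where a: "a \<in> ob" "t = cmp (iv (\<psi> a ())) (\<psi> a ())" unfolding T_def by blast
    have pa: "\<psi> a () \<in> hom Z (ty a)" using sp_hom[OF z(2) a(1)] .
    have ipa: "iv (\<psi> a ()) \<in> hom (ty a) Z" using inv_hom[OF pa] .
    have e: "cmp t g = cmp (iv (\<psi> a ())) (cmp (\<psi> a ()) g)" using a(2) assoc[OF gh pa ipa] by simp
    have l: "le (cmp (\<psi> a ()) g) (ff a)" using psi_g[OF p a(1)] unfolding g_def .
    have "le (cmp (iv (\<psi> a ())) (cmp (\<psi> a ()) g)) (cmp (iv (\<psi> a ())) (phi a ()))"
      using mono_l[OF ipa comp_hom[OF gh pa] fh[OF a(1)] l] phi_app[OF a(1)] by simp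
    moreover have "le (cmp (iv (\<psi> a ())) (phi a ())) (Hs Q A Z \<psi> X phi)"
      using H_upper[OF X z(1) z(2) spre_phi a(1)] .
    ultimately show "le (cmp t g) (Hs Q A Z \<psi> X phi)" unfolding e
      using trans[OF comp_hom[OF comp_hom[OF gh pa] ipa] comp_hom[OF sp_hom[OF spre_phi a(1)] ipa] Hh] by blast
  qed
  have "le g (Hs Q A Z \<psi> X phi)" using trans[OF gh comp_hom[OF gh Th] Hh 2 3] .
  then show ?thesis using antisym[OF gh Hh _ 1] unfolding g_def by blast
qed

lemma repr: "representable Q SC X \<Phi>"
  unfolding representable_def
proof (rule bexI[of _ "(X, phi)"], intro conjI ballI)
  have ext: "phi \<in> extensional ob" unfolding phi_def by simp
  show xo: "(X, phi) \<in> c_ob SC" using sc_ob[OF A] X ext spre_phi by blast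
  show "c_ty SC (X, phi) = X" by (simp add: sc_ty)
  fix p assume p: "p \<in> c_ob SC"
  obtain Z \<psi> where z: "p = (Z, \<psi>)" using prod.exhaust by blast
  show "\<Phi> p () = c_hom SC p (X, phi)" using key[of Z \<psi>] p z sc_hom[OF A _ xo] by simp
qed

end

lemma sc_complete: "symcomplete Q SC"
  unfolding symcomplete_def
proof (intro conjI ballI allI impI sc_sym)
  fix X \<Phi> assume X: "X \<in> obs" and sl: "sladj Q (ucat Q X) SC \<Phi>"
  have "spre Q SC X \<Phi>" using sladj_iff[OF X sc_sym] sl by blast
  then show "representable Q SC X \<Phi>" using repr[OF X] by blast
qed

end


context sa begin

context fixes B :: "('b,'o,'m) qcat" and F assumes B: "symcomplete Q B" and F: "qfunctor Q A B F"
begin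

lemma sB: "symcat Q B" using B unfolding symcomplete_def by blast
lemma qB: "qcat Q B" using sq[OF sB] .
lemma Fob: "a \<in> ob \<Longrightarrow> F a \<in> c_ob B" using F unfolding qfunctor_def by blast
lemma Fty: "a \<in> ob \<Longrightarrow> c_ty B (F a) = ty a" using F unfolding qfunctor_def by blast
lemma Fle: "a \<in> ob \<Longrightarrow> b \<in> ob \<Longrightarrow> le (ah b a) (c_hom B (F b) (F a))" using F unfolding qfunctor_def by blast
lemma bhF: "b \<in> c_ob B \<Longrightarrow> a \<in> ob \<Longrightarrow> c_hom B b (F a) \<in> hom (ty a) (c_ty B b)"
  using chom[OF qB Fob] Fty by metis
lemma bhF': "b \<in> c_ob B \<Longrightarrow> a \<in> ob \<Longrightarrow> c_hom B (F a) b \<in> hom (c_ty B b) (ty a)"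
  using chom[OF qB _ Fob] Fty by metis

definition "KK X \<phi> b = qs X (c_ty B b) ((\<lambda>a. cmp (c_hom B b (F a)) (\<phi> a ())) ` ob)"

lemma Ksub: "spre Q A X \<phi> \<Longrightarrow> b \<in> c_ob B \<Longrightarrow> (\<lambda>a. cmp (c_hom B b (F a)) (\<phi> a ())) ` ob \<subseteq> hom X (c_ty B b)"
  using sp_hom bhF comp_hom by blast

lemma Kh: "X \<in> obs \<Longrightarrow> spre Q A X \<phi> \<Longrightarrow> b \<in> c_ob B \<Longrightarrow> KK X \<phi> b \<in> hom X (c_ty B b)"
  unfolding KK_def using sup_hom[OF _ cty[OF qB] Ksub] by blast

lemma K_upper: "X \<in> obs \<Longrightarrow> spre Q A X \<phi> \<Longrightarrow> b \<in> c_ob B \<Longrightarrow> a \<in> ob \<Longrightarrow> le (cmp (c_hom B b (F a)) (\<phi> a ())) (KK X \<phi> b)"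
  unfolding KK_def using sup_upper[OF _ cty[OF qB] Ksub] by blast

lemma phi_le_K: assumes X: "X \<in> obs" and s: "spre Q A X \<phi>" and a: "a \<in> ob"
  shows "le (\<phi> a ()) (KK X \<phi> (F a))"
proof -
  have f: "\<phi> a () \<in> hom X (ty a)" using sp_hom[OF s a] .
  have h: "c_hom B (F a) (F a) \<in> hom (ty a) (ty a)" using bhF[OF Fob[OF a] a] Fty[OF a] by simp
  have i: "le (one (ty a)) (c_hom B (F a) (F a))" using cid[OF qB Fob[OF a]] Fty[OF a] by simp
  have 1: "le (\<phi> a ()) (cmp (c_hom B (F a) (F a)) (\<phi> a ()))"
    using mono_r[OF f id_hom[OF ty_obs[OF a]] h i] id_l[OF f] by simp
  have k: "KK X \<phi> (F a) \<in> hom X (ty a)" using Kh[OF X s Fob[OF a]] Fty[OF a] by simp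
  have 2: "le (cmp (c_hom B (F a) (F a)) (\<phi> a ())) (KK X \<phi> (F a))" using K_upper[OF X s Fob[OF a] a] .
  show ?thesis using trans[OF f comp_hom[OF f h] k 1 2] .
qed

lemma spre_K: assumes X: "X \<in> obs" and s: "spre Q A X \<phi>"
  shows "spre Q B X (\<lambda>b _. KK X \<phi> b)"
  unfolding spre_def
proof (intro conjI ballI)
  fix b assume b: "b \<in> c_ob B" show "KK X \<phi> b \<in> hom X (c_ty B b)" using Kh[OF X s b] .
next
  fix b b' assume b: "b \<in> c_ob B" "b' \<in> c_ob B"
  have bb: "c_hom B b' b \<in> hom (c_ty B b) (c_ty B b')" using chom[OF qB b] .
  show "le (cmp (c_hom B b' b) (KK X \<phi> b)) (KK X \<phi> b')"
    unfolding KK_def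
  proof (rule comp_sup_le[OF X cty[OF qB b(1)] Ksub[OF s b(1)] bb Kh[OF X s b(2), unfolded KK_def]])
    fix t assume "t \<in> (\<lambda>a. cmp (c_hom B b (F a)) (\<phi> a ())) ` ob"
    then obtain a where a: "a \<in> ob" "t = cmp (c_hom B b (F a)) (\<phi> a ())" by blast
    have f: "\<phi> a () \<in> hom X (ty a)" using sp_hom[OF s a(1)] .
    have e: "cmp (c_hom B b' b) t = cmp (cmp (c_hom B b' b) (c_hom B b (F a))) (\<phi> a ())"
      using a(2) assoc[OF f bhF[OF b(1) a(1)] bb] by simp
    have "le (cmp (c_hom B b' b) (c_hom B b (F a))) (c_hom B b' (F a))"
      using ccomp[OF qB Fob[OF a(1)] b(1) b(2)] .
    then have "le (cmp (cmp (c_hom B b' b) (c_hom B b (F a))) (\<phi> a ())) (cmp (c_hom B b' (F a)) (\<phi> a ()))"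
      using mono_r[OF f comp_hom[OF bhF[OF b(1) a(1)] bb] bhF[OF b(2) a(1)]] by blast
    then show "le (cmp (c_hom B b' b) t) (qs X (c_ty B b') ((\<lambda>a. cmp (c_hom B b' (F a)) (\<phi> a ())) ` ob))"
      unfolding e using trans[OF comp_hom[OF f comp_hom[OF bhF[OF b(1) a(1)] bb]] comp_hom[OF f bhF[OF b(2) a(1)]]
          Kh[OF X s b(2), unfolded KK_def]] K_upper[OF X s b(2) a(1), unfolded KK_def] by blast
  qed
next
  let ?S = "(\<lambda>b. cmp (iv (KK X \<phi> b)) (KK X \<phi> b)) ` c_ob B"
  have Ssub: "?S \<subseteq> hom X X" using Kh[OF X s] comp_hom inv_hom by blast
  have Sh: "qs X X ?S \<in> hom X X" using sup_hom[OF X X Ssub] .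
  have "le (qs X X ((\<lambda>a. cmp (iv (\<phi> a ())) (\<phi> a ())) ` ob)) (qs X X ?S)"
  proof (rule sup_least[OF X X sub_H[OF s s] Sh])
    fix t assume "t \<in> (\<lambda>a. cmp (iv (\<phi> a ())) (\<phi> a ())) ` ob"
    then obtain a where a: "a \<in> ob" "t = cmp (iv (\<phi> a ())) (\<phi> a ())" by blast
    have f: "\<phi> a () \<in> hom X (ty a)" using sp_hom[OF s a(1)] .
    have k: "KK X \<phi> (F a) \<in> hom X (ty a)" using Kh[OF X s Fob[OF a(1)]] Fty[OF a(1)] by simp
    have l: "le (\<phi> a ()) (KK X \<phi> (F a))" using phi_le_K[OF X s a(1)] .
    have "le t (cmp (iv (KK X \<phi> (F a))) (KK X \<phi> (F a)))"
      unfolding a(2) using mono2[OF f k inv_hom[OF f] inv_hom[OF k] l inv_mono[OF f k l]] .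
    moreover have "le (cmp (iv (KK X \<phi> (F a))) (KK X \<phi> (F a))) (qs X X ?S)"
      using sup_upper[OF X X Ssub] Fob[OF a(1)] by blast
    ultimately show "le t (qs X X ?S)"
      using trans[OF _ comp_hom[OF k inv_hom[OF k]] Sh] comp_hom[OF f inv_hom[OF f]] a(2) by blast
  qed
  then show "le (one X) (qs X X ?S)"
    using trans[OF id_hom[OF X] sup_hom[OF X X sub_H[OF s s]] Sh sp_unit[OF s]] by blast
next
  fix b b' assume b: "b \<in> c_ob B" "b' \<in> c_ob B"
  have tb: "c_ty B b \<in> obs" "c_ty B b' \<in> obs" using cty[OF qB] b by blast+
  have bb: "c_hom B b' b \<in> hom (c_ty B b) (c_ty B b')" using chom[OF qB b] .
  have e: "iv (KK X \<phi> b) = qs (c_ty B b) X (iv ` (\<lambda>a. cmp (c_hom B b (F a)) (\<phi> a ())) ` ob)"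
    unfolding KK_def using inv_sup[OF X tb(1) Ksub[OF s b(1)]] .
  have isub: "iv ` (\<lambda>a. cmp (c_hom B b (F a)) (\<phi> a ())) ` ob \<subseteq> hom (c_ty B b) X"
    using Ksub[OF s b(1)] inv_hom by blast
  have eq: "cmp (KK X \<phi> b') (iv (KK X \<phi> b)) = cmp (qs X (c_ty B b') ((\<lambda>a. cmp (c_hom B b' (F a)) (\<phi> a ())) ` ob))
     (qs (c_ty B b) X (iv ` (\<lambda>a. cmp (c_hom B b (F a)) (\<phi> a ())) ` ob))"
    by (simp only: e, simp only: KK_def)
  show "le (cmp (KK X \<phi> b') (iv (KK X \<phi> b))) (c_hom B b' b)"
    unfolding eq
  proof (rule sup_sup_le[OF tb(1) X tb(2) Ksub[OF s b(2)] isub bb])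
    fix u t assume u: "u \<in> (\<lambda>a. cmp (c_hom B b' (F a)) (\<phi> a ())) ` ob"
      and t: "t \<in> iv ` (\<lambda>a. cmp (c_hom B b (F a)) (\<phi> a ())) ` ob"
    obtain a where a: "a \<in> ob" "u = cmp (c_hom B b' (F a)) (\<phi> a ())" using u by blast
    obtain c where c: "c \<in> ob" "t = iv (cmp (c_hom B b (F c)) (\<phi> c ()))" using t by blast
    have fa: "\<phi> a () \<in> hom X (ty a)" using sp_hom[OF s a(1)] .
    have fc: "\<phi> c () \<in> hom X (ty c)" using sp_hom[OF s c(1)] .
    have ifc: "iv (\<phi> c ()) \<in> hom (ty c) X" using inv_hom[OF fc] .
    have k: "c_hom B b' (F a) \<in> hom (ty a) (c_ty B b')" using bhF[OF b(2) a(1)] .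
    have m: "c_hom B (F c) b \<in> hom (c_ty B b) (ty c)" using bhF'[OF b(1) c(1)] .
    have hac: "ah a c \<in> hom (ty c) (ty a)" using ah_hom[OF c(1) a(1)] .
    have ff: "c_hom B (F a) (F c) \<in> hom (ty c) (ty a)" using bhF[OF Fob[OF a(1)] c(1)] Fty[OF a(1)] by simp
    have bcf: "c_hom B b' (F c) \<in> hom (ty c) (c_ty B b')" using bhF[OF b(2) c(1)] .
    have te: "t = cmp (iv (\<phi> c ())) (c_hom B (F c) b)"
      using c(2) inv_comp[OF fc bhF[OF b(1) c(1)]] csym[OF sB Fob[OF c(1)] b(1)] by simp
    have 1: "le (cmp u t) (cmp (cmp (c_hom B b' (F a)) (ah a c)) (c_hom B (F c) b))"
      unfolding a(2) te by (rule mid[OF m ifc fa k hac sp_counit[OF s c(1) a(1)]])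
    have 2: "le (cmp (c_hom B b' (F a)) (ah a c)) (c_hom B b' (F c))"
      using mono_l[OF k hac ff Fle[OF c(1) a(1)]] ccomp[OF qB Fob[OF c(1)] Fob[OF a(1)] b(2)]
        trans[OF comp_hom[OF hac k] comp_hom[OF ff k] bcf] by blast
    have 3: "le (cmp (cmp (c_hom B b' (F a)) (ah a c)) (c_hom B (F c) b)) (cmp (c_hom B b' (F c)) (c_hom B (F c) b))"
      using mono_r[OF m comp_hom[OF hac k] bcf 2] .
    have 4: "le (cmp (c_hom B b' (F c)) (c_hom B (F c) b)) (c_hom B b' b)"
      using ccomp[OF qB b(1) Fob[OF c(1)] b(2)] .
    have uh: "u \<in> hom X (c_ty B b')" using a(2) comp_hom[OF fa k] by simp
    have th: "t \<in> hom (c_ty B b) X" using te comp_hom[OF m ifc] by simp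
    show "le (cmp u t) (c_hom B b' b)"
      using trans3[OF comp_hom[OF th uh] comp_hom[OF m comp_hom[OF hac k]] comp_hom[OF m bcf] bb 1 3 4] .
  qed
qed

definition "GG p = (SOME r. r \<in> c_ob B \<and> c_ty B r = fst p \<and> (\<forall>y\<in>c_ob B. KK (fst p) (snd p) y = c_hom B y r))"

lemma GG: assumes p: "(X, \<phi>) \<in> c_ob SC"
  shows "GG (X, \<phi>) \<in> c_ob B \<and> c_ty B (GG (X, \<phi>)) = X \<and> (\<forall>y\<in>c_ob B. KK X \<phi> y = c_hom B y (GG (X, \<phi>)))"
proof -
  have X: "X \<in> obs" and s: "spre Q A X \<phi>" using p sc_ob[OF A] by blast+
  have "sladj Q (ucat Q X) B (\<lambda>b _. KK X \<phi> b)" using sladj_iff[OF X sB] spre_K[OF X s] by blast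
  then have "representable Q B X (\<lambda>b _. KK X \<phi> b)" using B X unfolding symcomplete_def by blast
  then have "\<exists>r. r \<in> c_ob B \<and> c_ty B r = X \<and> (\<forall>y\<in>c_ob B. KK X \<phi> y = c_hom B y r)"
    unfolding representable_def by blast
  then show ?thesis unfolding GG_def fst_conv snd_conv by (rule someI_ex)
qed

lemma GG_fun: "qfunctor Q SC B GG"
  unfolding qfunctor_def
proof (intro conjI ballI)
  fix p assume p: "p \<in> c_ob SC"
  obtain X \<phi> where z: "p = (X, \<phi>)" using prod.exhaust by blast
  show "GG p \<in> c_ob B" "c_ty B (GG p) = c_ty SC p" using GG[of X \<phi>] p z by (simp_all add: sc_ty)
next
  fix p q assume p: "p \<in> c_ob SC" and q: "q \<in> c_ob SC"
  obtain X \<phi> where z: "p = (X, \<phi>)" "X \<in> obs" "spre Q A X \<phi>" using p by (rule sc_cases)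
  obtain Y \<psi> where w: "q = (Y, \<psi>)" "Y \<in> obs" "spre Q A Y \<psi>" using q by (rule sc_cases)
  have pz: "(X, \<phi>) \<in> c_ob SC" and qw: "(Y, \<psi>) \<in> c_ob SC" using p q z w by simp_all
  note gp = GG[OF pz] and gq = GG[OF qw]
  have e1: "c_hom SC q p = Hs Q A Y \<psi> X \<phi>" using sc_hom[OF A qw pz] z w by simp
  have e2: "c_hom B (GG q) (GG p) = KK X \<phi> (GG q)" using gp gq w z(1) by simp
  have Kq: "KK X \<phi> (GG q) \<in> hom X Y" using Kh[OF z(2,3), of "GG q"] gq w by simp
  have "le (Hs Q A Y \<psi> X \<phi>) (KK X \<phi> (GG q))"
  proof (rule H_least[OF z(2) w(2) w(3) z(3) Kq])
    fix a assume a: "a \<in> ob"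
    have fa: "\<phi> a () \<in> hom X (ty a)" using sp_hom[OF z(3) a] .
    have pa: "\<psi> a () \<in> hom Y (ty a)" using sp_hom[OF w(3) a] .
    have gqo: "GG q \<in> c_ob B" and tq: "c_ty B (GG q) = Y" using gq w by simp_all
    have k: "KK Y \<psi> (F a) \<in> hom Y (ty a)" using Kh[OF w(2,3) Fob[OF a]] Fty[OF a] by simp
    have ke: "KK Y \<psi> (F a) = c_hom B (F a) (GG q)" using gq w Fob[OF a] by simp
    have "le (iv (\<psi> a ())) (iv (KK Y \<psi> (F a)))" using inv_mono[OF pa k phi_le_K[OF w(2,3) a]] .
    moreover have "iv (KK Y \<psi> (F a)) = c_hom B (GG q) (F a)" using ke csym[OF sB gqo Fob[OF a]] by simp
    ultimately have l: "le (iv (\<psi> a ())) (c_hom B (GG q) (F a))" by simp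
    have bq: "c_hom B (GG q) (F a) \<in> hom (ty a) Y" using bhF[OF gqo a] tq by simp
    have "le (cmp (iv (\<psi> a ())) (\<phi> a ())) (cmp (c_hom B (GG q) (F a)) (\<phi> a ()))"
      using mono_r[OF fa inv_hom[OF pa] bq l] .
    moreover have "le (cmp (c_hom B (GG q) (F a)) (\<phi> a ())) (KK X \<phi> (GG q))"
      using K_upper[OF z(2,3) gqo a] .
    ultimately show "le (cmp (iv (\<psi> a ())) (\<phi> a ())) (KK X \<phi> (GG q))"
      using trans[OF comp_hom[OF fa inv_hom[OF pa]] comp_hom[OF fa bq] Kq] by blast
  qed
  then show "le (c_hom SC q p) (c_hom B (GG q) (GG p))" using e1 e2 by simp
qed

lemma GG_iso: assumes x: "x \<in> ob" shows "iso_obj Q B (GG (yoneda Q A x)) (F x)"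
proof -
  have p: "(ty x, yo x) \<in> c_ob SC" using yo_ob[OF x] unfolding yoneda_def .
  note g = GG[OF p]
  let ?r = "GG (ty x, yo x)"
  have tx: "ty x \<in> obs" using ty_obs[OF x] .
  have hr: "c_hom B (F x) ?r \<in> hom (ty x) (ty x)" using chom[OF qB g[THEN conjunct1] Fob[OF x]] g Fty[OF x] by simp
  have 1: "le (one (ty x)) (c_hom B (F x) ?r)"
  proof -
    have "le (yo x x ()) (KK (ty x) (yo x) (F x))" using phi_le_K[OF tx yo_spre[OF x] x] .
    then have "le (ah x x) (c_hom B (F x) ?r)" using g Fob[OF x] x by simp
    then show ?thesis using trans[OF id_hom[OF tx] ah_hom[OF x x] hr ah_id[OF x]] by blast
  qed
  have 2: "le (one (ty x)) (c_hom B ?r (F x))"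
    using inv_mono[OF id_hom[OF tx] hr 1] inv_id[OF tx] csym[OF sB g[THEN conjunct1] Fob[OF x]] by simp
  show ?thesis unfolding iso_obj_def yoneda_def using 1 2 g Fty[OF x] by simp
qed

end

end


context sa begin

lemma uniq:
  fixes B :: "('b,'o,'m) qcat" and G G'
  assumes sB: "symcat Q B" and G: "qfunctor Q SC B G" and G': "qfunctor Q SC B G'"
    and h: "\<forall>x\<in>ob. le (one (ty x)) (c_hom B (G (yoneda Q A x)) (G' (yoneda Q A x)))"
    and p: "p \<in> c_ob SC"
  shows "le (one (c_ty B (G p))) (c_hom B (G p) (G' p))"
proof -
  have qB: "qcat Q B" using sq[OF sB] .
  obtain X \<phi> where z: "p = (X, \<phi>)" "X \<in> obs" "spre Q A X \<phi>" using p by (rule sc_cases)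
  have pz: "(X, \<phi>) \<in> c_ob SC" using p z by simp
  have Go: "\<And>q. q \<in> c_ob SC \<Longrightarrow> G q \<in> c_ob B \<and> c_ty B (G q) = c_ty SC q" using G unfolding qfunctor_def by blast
  have G'o: "\<And>q. q \<in> c_ob SC \<Longrightarrow> G' q \<in> c_ob B \<and> c_ty B (G' q) = c_ty SC q" using G' unfolding qfunctor_def by blast
  have Gl: "\<And>q r. q \<in> c_ob SC \<Longrightarrow> r \<in> c_ob SC \<Longrightarrow> le (c_hom SC r q) (c_hom B (G r) (G q))" using G unfolding qfunctor_def by blast
  have G'l: "\<And>q r. q \<in> c_ob SC \<Longrightarrow> r \<in> c_ob SC \<Longrightarrow> le (c_hom SC r q) (c_hom B (G' r) (G' q))" using G' unfolding qfunctor_def by blast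
  have gp: "G p \<in> c_ob B" "c_ty B (G p) = X" using Go[OF p] z by (simp_all add: sc_ty)
  have g'p: "G' p \<in> c_ob B" "c_ty B (G' p) = X" using G'o[OF p] z by (simp_all add: sc_ty)
  have Bh: "c_hom B (G p) (G' p) \<in> hom X X" using chom[OF qB g'p(1) gp(1)] gp g'p by simp
  have "le (qs X X ((\<lambda>a. cmp (iv (\<phi> a ())) (\<phi> a ())) ` ob)) (c_hom B (G p) (G' p))"
  proof (rule sup_least[OF z(2) z(2) sub_H[OF z(3) z(3)] Bh])
    fix t assume "t \<in> (\<lambda>a. cmp (iv (\<phi> a ())) (\<phi> a ())) ` ob"
    then obtain a where a: "a \<in> ob" "t = cmp (iv (\<phi> a ())) (\<phi> a ())" by blast
    let ?Y = "yoneda Q A a"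
    have Yo: "?Y \<in> c_ob SC" using yo_ob[OF a(1)] .
    have gy: "G ?Y \<in> c_ob B" "c_ty B (G ?Y) = ty a" using Go[OF Yo] tyY by simp_all
    have g'y: "G' ?Y \<in> c_ob B" "c_ty B (G' ?Y) = ty a" using G'o[OF Yo] tyY by simp_all
    have fa: "\<phi> a () \<in> hom X (ty a)" using sp_hom[OF z(3) a(1)] .
    have ifa: "iv (\<phi> a ()) \<in> hom (ty a) X" using inv_hom[OF fa] .
    have m1: "c_hom B (G p) (G ?Y) \<in> hom (ty a) X" using chom[OF qB gy(1) gp(1)] gy gp by simp
    have m2: "c_hom B (G ?Y) (G' ?Y) \<in> hom (ty a) (ty a)" using chom[OF qB g'y(1) gy(1)] gy g'y by simp
    have m3: "c_hom B (G' ?Y) (G' p) \<in> hom X (ty a)" using chom[OF qB g'p(1) g'y(1)] g'y g'p by simp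
    have m4: "c_hom B (G p) (G' ?Y) \<in> hom (ty a) X" using chom[OF qB g'y(1) gp(1)] g'y gp by simp
    have l1: "le (\<phi> a ()) (c_hom B (G' ?Y) (G' p))" using G'l[OF p Yo] hYp[OF pz a(1)] z(1) by simp
    have l2: "le (iv (\<phi> a ())) (c_hom B (G p) (G ?Y))" using Gl[OF Yo p] hpY[OF pz a(1)] z(1) by simp
    have l3: "le (one (ty a)) (c_hom B (G ?Y) (G' ?Y))" using h a(1) by blast
    have s1: "le (cmp (iv (\<phi> a ())) (one (ty a))) (cmp (c_hom B (G p) (G ?Y)) (c_hom B (G ?Y) (G' ?Y)))"
      using mono2[OF id_hom[OF ty_obs[OF a(1)]] m2 ifa m1 l3 l2] .
    have s2: "le (cmp (c_hom B (G p) (G ?Y)) (c_hom B (G ?Y) (G' ?Y))) (c_hom B (G p) (G' ?Y))"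
      using ccomp[OF qB g'y(1) gy(1) gp(1)] .
    have s12: "le (iv (\<phi> a ())) (c_hom B (G p) (G' ?Y))"
      using trans[OF ifa comp_hom[OF m2 m1] m4 _ s2] s1 id_r[OF ifa] by simp
    have s3: "le t (cmp (c_hom B (G p) (G' ?Y)) (c_hom B (G' ?Y) (G' p)))"
      unfolding a(2) using mono2[OF fa m3 ifa m4 l1 s12] .
    have s4: "le (cmp (c_hom B (G p) (G' ?Y)) (c_hom B (G' ?Y) (G' p))) (c_hom B (G p) (G' p))"
      using ccomp[OF qB g'p(1) g'y(1) gp(1)] .
    show "le t (c_hom B (G p) (G' p))"
      using trans[OF _ comp_hom[OF m3 m4] Bh s3 s4] comp_hom[OF fa ifa] a(2) by blast
  qed
  then show ?thesis using trans[OF id_hom[OF z(2)] sup_hom[OF z(2) z(2) sub_H[OF z(3) z(3)]] Bh sp_unit[OF z(3)]] gp by simp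
qed

lemma main:
  "symcomplete Q (symcompletion Q A) \<and>
         qfunctor Q A (symcompletion Q A) (yoneda Q A) \<and>
         (\<forall>(B :: ('b,'o,'m) qcat) F. symcomplete Q B \<and> qfunctor Q A B F \<longrightarrow>
            (\<exists>G. qfunctor Q (symcompletion Q A) B G \<and>
                 (\<forall>x\<in>c_ob A. iso_obj Q B (G (yoneda Q A x)) (F x)))) \<and>
         (\<forall>(B :: ('b,'o,'m) qcat) G G'. symcomplete Q B \<and>
            qfunctor Q (symcompletion Q A) B G \<and> qfunctor Q (symcompletion Q A) B G' \<and>
            (\<forall>x\<in>c_ob A. iso_obj Q B (G (yoneda Q A x)) (G' (yoneda Q A x))) \<longrightarrow>
            (\<forall>p\<in>c_ob (symcompletion Q A). iso_obj Q B (G p) (G' p)))"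
proof (intro conjI allI impI ballI)
  show "symcomplete Q SC" by (rule sc_complete)
  show "qfunctor Q A SC (yoneda Q A)" by (rule yo_fun)
next
  fix B :: "('b,'o,'m) qcat" and F
  assume a: "symcomplete Q B \<and> qfunctor Q A B F"
  show "\<exists>G. qfunctor Q SC B G \<and> (\<forall>x\<in>ob. iso_obj Q B (G (yoneda Q A x)) (F x))"
    using GG_fun[of B F] GG_iso[of B F] a by blast
next
  fix B :: "('b,'o,'m) qcat" and G G' p
  assume a: "symcomplete Q B \<and> qfunctor Q SC B G \<and> qfunctor Q SC B G' \<and>
            (\<forall>x\<in>ob. iso_obj Q B (G (yoneda Q A x)) (G' (yoneda Q A x)))"
    and p: "p \<in> c_ob SC"
  have sB: "symcat Q B" using a unfolding symcomplete_def by blast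
  have ty: "c_ty B (G p) = c_ty B (G' p)"
    using a p unfolding qfunctor_def by metis
  have h1: "\<forall>x\<in>ob. le (one (ty x)) (c_hom B (G (yoneda Q A x)) (G' (yoneda Q A x)))"
    using a tyY unfolding iso_obj_def qfunctor_def by (metis yo_ob)
  have h2: "\<forall>x\<in>ob. le (one (ty x)) (c_hom B (G' (yoneda Q A x)) (G (yoneda Q A x)))"
    using a tyY unfolding iso_obj_def qfunctor_def by (metis yo_ob)
  have 1: "le (one (c_ty B (G p))) (c_hom B (G p) (G' p))" using uniq[OF sB _ _ h1 p] a by blast
  have 2: "le (one (c_ty B (G' p))) (c_hom B (G' p) (G p))" using uniq[OF sB _ _ h2 p] a by blast
  show "iso_obj Q B (G p) (G' p)" unfolding iso_obj_def using ty 1 2 by simp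
qed

end

theorem proposition3p3:
  fixes Q :: "('o,'m) quantaloid" and A :: "('a,'o,'m) qcat"
  assumes "involutive_quantaloid Q" and "symcat Q A"
  shows "symcomplete Q (symcompletion Q A) \<and>
         qfunctor Q A (symcompletion Q A) (yoneda Q A) \<and>
         (\<forall>(B :: ('b,'o,'m) qcat) F. symcomplete Q B \<and> qfunctor Q A B F \<longrightarrow>
            (\<exists>G. qfunctor Q (symcompletion Q A) B G \<and>
                 (\<forall>x\<in>c_ob A. iso_obj Q B (G (yoneda Q A x)) (F x)))) \<and>
         (\<forall>(B :: ('b,'o,'m) qcat) G G'. symcomplete Q B \<and>
            qfunctor Q (symcompletion Q A) B G \<and> qfunctor Q (symcompletion Q A) B G' \<and>
            (\<forall>x\<in>c_ob A. iso_obj Q B (G (yoneda Q A x)) (G' (yoneda Q A x))) \<longrightarrow>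
            (\<forall>p\<in>c_ob (symcompletion Q A). iso_obj Q B (G p) (G' p)))"
proof -
  interpret sa Q A using assms by (simp add: sa_def iq_def sa_axioms_def)
  show ?thesis by (rule main)
qed

end
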